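(* Let $r\ge3$, $n>r$. (i) There is a unique automorphism $\nu$ of $T$, of order $n$, with $\nu(E_i)=E_{i+1}$, $\nu(F_i)=F_{i+1}$, $\nu(K_i^{\pm1})=K_{i+1}^{\pm1}$ for all $1\le i\le n$ (subscripts mod $n$); it satisfies $\nu(1_\lambda)=1_{\lambda_+}$ for $\lambda\in\Lambda(n,r)$, where $\lambda_+=(\lambda_n,\lambda_1,\lambda_2,\dots,\lambda_{n-1})$. (ii) There is a unique anti-automorphism $\sigma$ of $T$ with $\sigma(E_i)=F_i$, $\sigma(F_i)=E_i$, $\sigma(K_i^{\pm1})=K_i^{\pm1}$ for all $1\le i\le n$; it fixes every $1_\lambda$.
   Context: $T$ is the $\mathbb{Q}(v)$-algebra with generators $E_i,F_i,K_i^{\pm1}$ ($1\le i\le n$, indices mod $n$) and relations: $K_iK_j=K_jK_i$; $K_iK_i^{-1}=K_i^{-1}K_i=1$; $K_iE_j=v^{\epsilon^+(i,j)}E_jK_i$; $K_iF_j=v^{-\epsilon^+(i,j)}F_jK_i$ ($\epsilon^+(i,j)=1$ if $j=i$, $-1$ if $j\equiv i-1\pmod n$, $0$ otherwise); $E_iF_j-F_jE_i=\delta_{ij}\frac{K_iK_{i+1}^{-1}-K_i^{-1}K_{i+1}}{v-v^{-1}}$; $E_iE_j=E_jE_i$, $F_iF_j=F_jF_i$ if $i-j\not\equiv\pm1$; $E_i^2E_j-(v+v^{-1})E_iE_jE_i+E_jE_i^2=0$, $F_i^2F_j-(v+v^{-1})F_iF_jF_i+F_jF_i^2=0$ if $i-j\equiv\pm1\pmod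 n$; $K_1\cdots K_n=v^r$; $\prod_{j=0}^r(K_i-v^j)=0$. $\Lambda(n,r)$: compositions of $r$ into $n$ nonnegative parts. $1_\lambda=\prod_{i=1}^n\prod_{s=1}^{\lambda_i}\frac{K_iv^{-s+1}-K_i^{-1}v^{s-1}}{v^s-v^{-s}}$. *)

theory Defs
  imports Main "HOL-Library.Poly_Mapping" "HOL-Computational_Algebra.Polynomial"
          "HOL-Computational_Algebra.Fraction_Field"
begin

type_synonym qv = "rat poly fract"

definition vv :: qv where "vv = Fract [:0, 1:] 1"

text \<open>Indices are 0-based: 0..n-1, taken mod n (a shift of the paper's 1..n).\<close>

datatype gen = GE nat | GF nat | GK nat | GKi nat

fun gidx :: "gen \<Rightarrow> nat" where
  "gidx (GE i) = i" | "gidx (GF i) = i" | "gidx (GK i) = i" | "gidx (GKi i) = i"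

type_synonym fa = "gen list \<Rightarrow>\<^sub>0 qv"

definition fmul :: "fa \<Rightarrow> fa \<Rightarrow> fa" where
  "fmul p q = (\<Sum>u\<in>Poly_Mapping.keys p. \<Sum>w\<in>Poly_Mapping.keys q.
      Poly_Mapping.single (u @ w) (Poly_Mapping.lookup p u * Poly_Mapping.lookup q w))"

definition fsc :: "qv \<Rightarrow> fa \<Rightarrow> fa" where
  "fsc c p = (\<Sum>u\<in>Poly_Mapping.keys p. Poly_Mapping.single u (c * Poly_Mapping.lookup p u))"

definition fone :: fa where "fone = Poly_Mapping.single [] 1"

definition fgen :: "gen \<Rightarrow> fa" where "fgen g = Poly_Mapping.single [g] 1"

definition fprod :: "fa list \<Rightarrow> fa" where "fprod xs = foldr fmul xs fone"

definition FA :: "nat \<Rightarrow> fa set" where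
  "FA n = {p. \<forall>w\<in>Poly_Mapping.keys p. \<forall>g\<in>set w. gidx g < n}"

definition epsp :: "nat \<Rightarrow> nat \<Rightarrow> nat \<Rightarrow> int" where
  "epsp n i j = (if j = i then 1 else if j = (i + n - 1) mod n then -1 else 0)"

definition adj :: "nat \<Rightarrow> nat \<Rightarrow> nat \<Rightarrow> bool" where
  "adj n i j \<longleftrightarrow> j = (i + 1) mod n \<or> i = (j + 1) mod n"

abbreviation "fE i \<equiv> fgen (GE i)"
abbreviation "fF i \<equiv> fgen (GF i)"
abbreviation "fK i \<equiv> fgen (GK i)"
abbreviation "fKi i \<equiv> fgen (GKi i)"

definition Rels :: "nat \<Rightarrow> nat \<Rightarrow> fa set" where
  "Rels n r =
     {fmul (fK i) (fK j) - fmul (fK j) (fK i) | i j. i < n \<and> j < n}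
   \<union> {fmul (fK i) (fKi i) - fone | i. i < n}
   \<union> {fmul (fKi i) (fK i) - fone | i. i < n}
   \<union> {fmul (fK i) (fE j) - fsc (vv powi epsp n i j) (fmul (fE j) (fK i)) | i j. i < n \<and> j < n}
   \<union> {fmul (fK i) (fF j) - fsc (vv powi (- epsp n i j)) (fmul (fF j) (fK i)) | i j. i < n \<and> j < n}
   \<union> {fmul (fE i) (fF j) - fmul (fF j) (fE i)
        - (if i = j then fsc (1 / (vv - 1 / vv))
              (fmul (fK i) (fKi ((i + 1) mod n)) - fmul (fKi i) (fK ((i + 1) mod n)))
           else 0) | i j. i < n \<and> j < n}
   \<union> {fmul (fE i) (fE j) - fmul (fE j) (fE i) | i j. i < n \<and> j < n \<and> \<not> adj n i j}
   \<union> {fmul (fF i) (fF j) - fmul (fF j) (fF i) | i j. i < n \<and> j < n \<and> \<not> adj n i j}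
   \<union> {fprod [fE i, fE i, fE j] - fsc (vv + 1 / vv) (fprod [fE i, fE j, fE i])
        + fprod [fE j, fE i, fE i] | i j. i < n \<and> j < n \<and> adj n i j}
   \<union> {fprod [fF i, fF i, fF j] - fsc (vv + 1 / vv) (fprod [fF i, fF j, fF i])
        + fprod [fF j, fF i, fF i] | i j. i < n \<and> j < n \<and> adj n i j}
   \<union> {fprod (map fK [0..<n]) - fsc (vv ^ r) fone}
   \<union> {fprod (map (\<lambda>j. fK i - fsc (vv ^ j) fone) [0..<r + 1]) | i. i < n}"

inductive_set Id :: "nat \<Rightarrow> nat \<Rightarrow> fa set" for n r where
  rel: "p \<in> Rels n r \<Longrightarrow> p \<in> Id n r"
| zero: "0 \<in> Id n r"
| add: "p \<in> Id n r \<Longrightarrow> q \<in> Id n r \<Longrightarrow> p + q \<in> Id n r"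
| smul: "p \<in> Id n r \<Longrightarrow> fsc c p \<in> Id n r"
| mul: "p \<in> Id n r \<Longrightarrow> a \<in> FA n \<Longrightarrow> b \<in> FA n \<Longrightarrow> fmul a (fmul p b) \<in> Id n r"

definition cls :: "nat \<Rightarrow> nat \<Rightarrow> fa \<Rightarrow> fa set" where
  "cls n r p = {q \<in> FA n. q - p \<in> Id n r}"

definition Tcar :: "nat \<Rightarrow> nat \<Rightarrow> fa set set" where
  "Tcar n r = cls n r ` FA n"

definition rep :: "fa set \<Rightarrow> fa" where "rep A = (SOME p. p \<in> A)"

definition Tadd :: "nat \<Rightarrow> nat \<Rightarrow> fa set \<Rightarrow> fa set \<Rightarrow> fa set" where
  "Tadd n r A B = cls n r (rep A + rep B)"

definition Tmul :: "nat \<Rightarrow> nat \<Rightarrow> fa set \<Rightarrow> fa set \<Rightarrow> fa set" where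
  "Tmul n r A B = cls n r (fmul (rep A) (rep B))"

definition Tsmul :: "nat \<Rightarrow> nat \<Rightarrow> qv \<Rightarrow> fa set \<Rightarrow> fa set" where
  "Tsmul n r c A = cls n r (fsc c (rep A))"

definition Tone :: "nat \<Rightarrow> nat \<Rightarrow> fa set" where "Tone n r = cls n r fone"

definition Tgen :: "nat \<Rightarrow> nat \<Rightarrow> gen \<Rightarrow> fa set" where "Tgen n r g = cls n r (fgen g)"

definition Comps :: "nat \<Rightarrow> nat \<Rightarrow> (nat \<Rightarrow> nat) set" where
  "Comps n r = {lam. (\<forall>i\<ge>n. lam i = 0) \<and> (\<Sum>i<n. lam i) = r}"

text \<open>lambda_+ = (lambda_n, lambda_1, ..., lambda_{n-1}); 0-based: mu i = lambda (i-1 mod n).\<close>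
definition shiftc :: "nat \<Rightarrow> (nat \<Rightarrow> nat) \<Rightarrow> nat \<Rightarrow> nat" where
  "shiftc n lam i = (if i < n then lam ((i + n - 1) mod n) else 0)"

definition fidem :: "nat \<Rightarrow> (nat \<Rightarrow> nat) \<Rightarrow> fa" where
  "fidem n lam = fprod (map (\<lambda>i. fprod (map (\<lambda>s.
       fsc (1 / (vv ^ s - vv powi (- int s)))
         (fsc (vv powi (1 - int s)) (fK i) - fsc (vv powi (int s - 1)) (fKi i)))
       [1..<lam i + 1])) [0..<n])"

definition Tidem :: "nat \<Rightarrow> nat \<Rightarrow> (nat \<Rightarrow> nat) \<Rightarrow> fa set" where
  "Tidem n r lam = cls n r (fidem n lam)"

definition T_lin :: "nat \<Rightarrow> nat \<Rightarrow> (fa set \<Rightarrow> fa set) \<Rightarrow> bool" where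
  "T_lin n r \<phi> \<longleftrightarrow> bij_betw \<phi> (Tcar n r) (Tcar n r)
     \<and> (\<forall>A\<in>Tcar n r. \<forall>B\<in>Tcar n r. \<phi> (Tadd n r A B) = Tadd n r (\<phi> A) (\<phi> B))
     \<and> (\<forall>c. \<forall>A\<in>Tcar n r. \<phi> (Tsmul n r c A) = Tsmul n r c (\<phi> A))
     \<and> \<phi> (Tone n r) = Tone n r"

definition T_aut :: "nat \<Rightarrow> nat \<Rightarrow> (fa set \<Rightarrow> fa set) \<Rightarrow> bool" where
  "T_aut n r \<phi> \<longleftrightarrow> T_lin n r \<phi>
     \<and> (\<forall>A\<in>Tcar n r. \<forall>B\<in>Tcar n r. \<phi> (Tmul n r A B) = Tmul n r (\<phi> A) (\<phi> B))"

definition T_antiaut :: "nat \<Rightarrow> nat \<Rightarrow> (fa set \<Rightarrow> fa set) \<Rightarrow> bool" where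
  "T_antiaut n r \<phi> \<longleftrightarrow> T_lin n r \<phi>
     \<and> (\<forall>A\<in>Tcar n r. \<forall>B\<in>Tcar n r. \<phi> (Tmul n r A B) = Tmul n r (\<phi> B) (\<phi> A))"

definition nu_gens :: "nat \<Rightarrow> nat \<Rightarrow> (fa set \<Rightarrow> fa set) \<Rightarrow> bool" where
  "nu_gens n r \<phi> \<longleftrightarrow> (\<forall>i<n.
       \<phi> (Tgen n r (GE i)) = Tgen n r (GE ((i + 1) mod n))
     \<and> \<phi> (Tgen n r (GF i)) = Tgen n r (GF ((i + 1) mod n))
     \<and> \<phi> (Tgen n r (GK i)) = Tgen n r (GK ((i + 1) mod n))
     \<and> \<phi> (Tgen n r (GKi i)) = Tgen n r (GKi ((i + 1) mod n)))"

definition sigma_gens :: "nat \<Rightarrow> nat \<Rightarrow> (fa set \<Rightarrow> fa set) \<Rightarrow> bool" where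
  "sigma_gens n r \<phi> \<longleftrightarrow> (\<forall>i<n.
       \<phi> (Tgen n r (GE i)) = Tgen n r (GF i)
     \<and> \<phi> (Tgen n r (GF i)) = Tgen n r (GE i)
     \<and> \<phi> (Tgen n r (GK i)) = Tgen n r (GK i)
     \<and> \<phi> (Tgen n r (GKi i)) = Tgen n r (GKi i))"

end

theory Submission
  imports Defs
begin


instantiation list :: (type) monoid_add
begin
definition zero_list :: "'a list" where "zero_list = []"
definition plus_list :: "'a list \<Rightarrow> 'a list \<Rightarrow> 'a list" where "plus_list xs ys = xs @ ys"
instance by standard (auto simp: zero_list_def plus_list_def)
end

abbreviation sg :: "gen list \<Rightarrow> qv \<Rightarrow> fa" where "sg \<equiv> Poly_Mapping.single"
abbreviation lk :: "fa \<Rightarrow> gen list \<Rightarrow> qv" where "lk \<equiv> Poly_Mapping.lookup"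
abbreviation ks :: "fa \<Rightarrow> gen list set" where "ks \<equiv> Poly_Mapping.keys"

lemma sg_mult: "sg u a * sg w b = sg (u @ w) (a * b)"
  using mult_single[of u a w b] by (simp add: plus_list_def)

lemma one_fa: "(1::fa) = sg [] 1"
  by (metis single_one zero_list_def)

lemma fa_expand: "(\<Sum>k\<in>ks p. sg k (lk p k)) = p"
proof (rule poly_mapping_eqI)
  fix x
  have "(\<Sum>k\<in>ks p. lk (sg k (lk p k)) x) = (\<Sum>k\<in>ks p. if k = x then lk p k else 0)"
    by (rule sum.cong) (auto simp: lookup_single when_def)
  also have "\<dots> = lk p x" by (simp add: in_keys_iff)
  finally show "lk (\<Sum>k\<in>ks p. sg k (lk p k)) x = lk p x" by (simp add: lookup_sum)
qed

lemma fa_induct_keys[case_names zero single add]: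
  assumes "P 0" "\<And>k c. k \<in> ks p \<Longrightarrow> P (sg k c)" "\<And>p q. P p \<Longrightarrow> P q \<Longrightarrow> P (p + q)"
  shows "P p"
proof -
  have "P (\<Sum>k\<in>K. sg k (lk p k))" if "K \<subseteq> ks p" for K
  proof -
    have "finite K" using that by (rule finite_subset) simp
    then show ?thesis using that
    proof induct
      case empty then show ?case using assms(1) by simp
    next
      case (insert x F)
      then have "P (sg x (lk p x))" "P (\<Sum>k\<in>F. sg k (lk p k))" using assms(2) by auto
      then show ?case using insert(1,2) assms(3) by (simp add: sum.insert)
    qed
  qed
  from this[of "ks p"] show ?thesis by (simp add: fa_expand)
qed

lemma fa_induct[case_names zero single add]:
  assumes "P 0" "\<And>k c. P (sg k c)" "\<And>p q. P p \<Longrightarrow> P q \<Longrightarrow> P (p + q)"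
  shows "P p"
  by (rule fa_induct_keys[where P=P]) (rule assms(1), rule assms(2), erule (1) assms(3))

definition Lg :: "(gen list \<Rightarrow> qv) \<Rightarrow> fa \<Rightarrow> qv" where
  "Lg g p = (\<Sum>x\<in>ks p. lk p x * g x)"

lemma Lg_add[simp]: "Lg g (p + q) = Lg g p + Lg g q"
  unfolding Lg_def by (rule setsum_keys_plus_distrib) (auto simp: distrib_right)

lemma Lg_single[simp]: "Lg g (sg k c) = c * g k"
  by (cases "c = 0") (auto simp: Lg_def)

lemma Lg_zero[simp]: "Lg g 0 = 0"
  by (simp add: Lg_def)

lemma Lg_uminus[simp]: "Lg g (- p) = - Lg g p"
proof -
  have "Lg g (- p) + Lg g p = 0" by (metis Lg_add Lg_zero left_minus)
  then show ?thesis by (simp add: eq_neg_iff_add_eq_0)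
qed

lemma Lg_diff[simp]: "Lg g (p - q) = Lg g p - Lg g q"
  by (metis Lg_add Lg_uminus diff_conv_add_uminus)

lemma Lg_sum: "Lg g (sum f A) = (\<Sum>a\<in>A. Lg g (f a))"
  by (induct A rule: infinite_finite_induct) auto

lemma Lg_cong: "(\<And>x. x \<in> ks p \<Longrightarrow> g x = h x) \<Longrightarrow> Lg g p = Lg h p"
  by (simp add: Lg_def)

definition subst :: "(gen list \<Rightarrow> gen list) \<Rightarrow> fa \<Rightarrow> fa" where
  "subst f p = (\<Sum>x\<in>ks p. sg (f x) (lk p x))"

lemma subst_add[simp]: "subst f (p + q) = subst f p + subst f q"
  unfolding subst_def by (rule setsum_keys_plus_distrib) (auto simp: single_add)

lemma subst_single[simp]: "subst f (sg k c) = sg (f k) c"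
  by (cases "c = 0") (auto simp: subst_def)

lemma subst_zero[simp]: "subst f 0 = 0"
  by (simp add: subst_def)

lemma subst_uminus[simp]: "subst f (- p) = - subst f p"
proof -
  have "subst f (- p) + subst f p = 0" by (metis subst_add subst_zero left_minus)
  then show ?thesis by (simp add: eq_neg_iff_add_eq_0)
qed

lemma subst_diff[simp]: "subst f (p - q) = subst f p - subst f q"
  by (metis subst_add subst_uminus diff_conv_add_uminus)

lemma subst_sum: "subst f (sum h A) = (\<Sum>a\<in>A. subst f (h a))"
  by (induct A rule: infinite_finite_induct) auto

lemma subst_mult:
  assumes "\<And>u w. f (u @ w) = f u @ f w"
  shows "subst f (p * q) = subst f p * subst f q"
proof (induct p rule: fa_induct)
  case (single k c)
  show ?case
    by (induct q rule: fa_induct) (auto simp: sg_mult assms distrib_left)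
qed (auto simp: distrib_right)

lemma subst_mult_anti:
  assumes "\<And>u w. f (u @ w) = f w @ f u"
  shows "subst f (p * q) = subst f q * subst f p"
proof (induct p rule: fa_induct)
  case (single k c)
  show ?case
    by (induct q rule: fa_induct) (auto simp: sg_mult assms distrib_left distrib_right mult.commute)
qed (auto simp: distrib_right distrib_left)

lemma subst_comp: "subst f (subst g p) = subst (f \<circ> g) p"
  by (induct p rule: fa_induct) auto

lemma subst_id_on: "(\<And>x. x \<in> ks p \<Longrightarrow> f x = x) \<Longrightarrow> subst f p = p"
  unfolding subst_def using fa_expand[of p] by (metis (no_types, lifting) sum.cong)

abbreviation C :: "qv \<Rightarrow> fa" where "C c \<equiv> sg [] c"

lemma fmul_eq: "fmul p q = p * q"
proof -
  have "p * q = (\<Sum>u\<in>ks p. sg u (lk p u)) * (\<Sum>w\<in>ks q. sg w (lk q w))"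
    by (simp add: fa_expand)
  also have "\<dots> = fmul p q"
    unfolding sum_product fmul_def by (simp add: sg_mult)
  finally show ?thesis by simp
qed

lemma fsc_eq: "fsc c p = C c * p"
proof -
  have "C c * p = C c * (\<Sum>u\<in>ks p. sg u (lk p u))" by (simp add: fa_expand)
  also have "\<dots> = fsc c p" unfolding sum_distrib_left fsc_def by (simp add: sg_mult)
  finally show ?thesis by simp
qed

lemma fone_eq: "fone = 1" by (simp add: fone_def one_fa)

lemma fprod_eq: "fprod xs = prod_list xs"
  by (induct xs) (auto simp: fprod_def fone_eq fmul_eq)

lemma C_comm: "C c * p = p * C c"
  by (induct p rule: fa_induct) (auto simp: sg_mult distrib_left distrib_right mult.commute)

lemma C_mult: "C c * C d = C (c * d)" by (simp add: sg_mult)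
lemma C_add: "C (c + d) = C c + C d" by (simp add: single_add)
lemma C_one: "C 1 = 1" by (simp add: one_fa)

lemma Lg_C_mult[simp]: "Lg g (C c * p) = c * Lg g p"
  by (induct p rule: fa_induct) (auto simp: sg_mult distrib_left)

lemma Lg_mult_left: "Lg g (sg x c * q) = c * Lg (\<lambda>y. g (x @ y)) q"
  by (induct q rule: fa_induct) (auto simp: sg_mult distrib_left)

lemma Lg_mult_right: "Lg g (q * sg x c) = c * Lg (\<lambda>y. g (y @ x)) q"
  by (induct q rule: fa_induct) (auto simp: sg_mult distrib_left distrib_right)




definition fw :: "nat \<Rightarrow> gen list \<Rightarrow> bool" where "fw n w \<longleftrightarrow> (\<forall>g\<in>set w. gidx g < n)"

lemma fw_simps[simp]: "fw n []" "fw n (g # w) \<longleftrightarrow> gidx g < n \<and> fw n w" "fw n (u @ w) \<longleftrightarrow> fw n u \<and> fw n w"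
  by (auto simp: fw_def)

lemma FA_iff: "p \<in> FA n \<longleftrightarrow> (\<forall>w\<in>ks p. fw n w)"
  by (simp add: FA_def fw_def)

lemma FA_0[simp]: "0 \<in> FA n" by (simp add: FA_iff)
lemma FA_sg[simp]: "fw n k \<Longrightarrow> sg k c \<in> FA n" by (simp add: FA_iff)
lemma FA_C[simp]: "C c \<in> FA n" by simp
lemma FA_1[simp]: "1 \<in> FA n" by (simp add: one_fa)
lemma FA_add[simp]: "p \<in> FA n \<Longrightarrow> q \<in> FA n \<Longrightarrow> p + q \<in> FA n"
  using keys_add[of p q] by (auto simp: FA_iff)
lemma FA_uminus[simp]: "p \<in> FA n \<Longrightarrow> - p \<in> FA n"
  by (simp add: FA_iff keys_minus)
lemma FA_diff[simp]: "p \<in> FA n \<Longrightarrow> q \<in> FA n \<Longrightarrow> p - q \<in> FA n"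
  by (metis FA_add FA_uminus diff_conv_add_uminus)
lemma FA_mult[simp]: "p \<in> FA n \<Longrightarrow> q \<in> FA n \<Longrightarrow> p * q \<in> FA n"
  using keys_mult[of p q] by (fastforce simp: FA_iff plus_list_def)
lemma FA_sum[simp]: "(\<And>a. a \<in> A \<Longrightarrow> f a \<in> FA n) \<Longrightarrow> sum f A \<in> FA n"
  by (induct A rule: infinite_finite_induct) auto
lemma FA_prod_list[simp]: "(\<And>x. x \<in> set xs \<Longrightarrow> x \<in> FA n) \<Longrightarrow> prod_list xs \<in> FA n"
  by (induct xs) auto
lemma FA_fgen[simp]: "gidx g < n \<Longrightarrow> fgen g \<in> FA n"
  by (simp add: fgen_def)

lemma C_minus1: "C (-1) * p = - p"
  by (simp add: single_uminus one_fa[symmetric])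

lemma Id_C: "p \<in> Id n r \<Longrightarrow> C c * p \<in> Id n r"
  using Id.smul[of p n r c] by (simp add: fsc_eq)
lemma Id_uminus: "p \<in> Id n r \<Longrightarrow> - p \<in> Id n r"
  using Id_C[of p n r "-1"] by (simp add: C_minus1)
lemma Id_diff: "p \<in> Id n r \<Longrightarrow> q \<in> Id n r \<Longrightarrow> p - q \<in> Id n r"
  by (metis Id.add Id_uminus diff_conv_add_uminus)
lemma Id_mult: "p \<in> Id n r \<Longrightarrow> a \<in> FA n \<Longrightarrow> b \<in> FA n \<Longrightarrow> a * p * b \<in> Id n r"
  using Id.mul[of p n r a b] by (simp add: fmul_eq mult.assoc)
lemma Id_mult_left: "p \<in> Id n r \<Longrightarrow> a \<in> FA n \<Longrightarrow> a * p \<in> Id n r"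
  using Id_mult[of p n r a 1] by simp
lemma Id_mult_right: "p \<in> Id n r \<Longrightarrow> b \<in> FA n \<Longrightarrow> p * b \<in> Id n r"
  using Id_mult[of p n r 1 b] by simp
lemma Id_sum: "(\<And>a. a \<in> A \<Longrightarrow> f a \<in> Id n r) \<Longrightarrow> sum f A \<in> Id n r"
  by (induct A rule: infinite_finite_induct) (auto intro: Id.zero Id.add)

definition cg :: "nat \<Rightarrow> nat \<Rightarrow> fa \<Rightarrow> fa \<Rightarrow> bool" where "cg n r p q \<longleftrightarrow> p - q \<in> Id n r"

lemma cg_refl[simp]: "cg n r p p" by (simp add: cg_def Id.zero)
lemma cg_sym: "cg n r p q \<Longrightarrow> cg n r q p"
  unfolding cg_def using Id_uminus[of "p - q" n r] by simp
lemma cg_trans: "cg n r p q \<Longrightarrow> cg n r q s \<Longrightarrow> cg n r p s"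
  unfolding cg_def using Id.add[of "p - q" n r "q - s"] by simp
lemma cg_add: "cg n r p q \<Longrightarrow> cg n r p' q' \<Longrightarrow> cg n r (p + p') (q + q')"
  unfolding cg_def using Id.add[of "p - q" n r "p' - q'"] by (simp add: algebra_simps)
lemma cg_diff: "cg n r p q \<Longrightarrow> cg n r p' q' \<Longrightarrow> cg n r (p - p') (q - q')"
  unfolding cg_def using Id_diff[of "p - q" n r "p' - q'"] by (simp add: algebra_simps)
lemma cg_mult: "cg n r a a' \<Longrightarrow> cg n r b b' \<Longrightarrow> a' \<in> FA n \<Longrightarrow> b \<in> FA n \<Longrightarrow> cg n r (a * b) (a' * b')"
proof -
  assume h: "cg n r a a'" "cg n r b b'" "a' \<in> FA n" "b \<in> FA n"
  have "a * b - a' * b' = (a - a') * b + a' * (b - b')" by (simp add: algebra_simps)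
  moreover have "(a - a') * b \<in> Id n r" using h by (simp add: cg_def Id_mult_right)
  moreover have "a' * (b - b') \<in> Id n r" using h by (simp add: cg_def Id_mult_left)
  ultimately show ?thesis by (simp add: cg_def Id.add)
qed
lemma cg_C: "cg n r p q \<Longrightarrow> cg n r (C c * p) (C c * q)"
  unfolding cg_def using Id_C[of "p - q" n r c] by (simp add: algebra_simps)
lemma cg_Id: "p \<in> Id n r \<Longrightarrow> cg n r p 0" by (simp add: cg_def)

lemma cls_mem: "p \<in> FA n \<Longrightarrow> p \<in> cls n r p"
  by (simp add: cls_def Id.zero)
lemma rep_cls: "p \<in> FA n \<Longrightarrow> rep (cls n r p) \<in> FA n \<and> cg n r (rep (cls n r p)) p"
proof -
  assume "p \<in> FA n"
  then have "rep (cls n r p) \<in> cls n r p" unfolding rep_def by (meson cls_mem someI)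
  then show ?thesis by (simp add: cls_def cg_def)
qed
lemma cls_eq_iff: "p \<in> FA n \<Longrightarrow> q \<in> FA n \<Longrightarrow> cls n r p = cls n r q \<longleftrightarrow> cg n r p q"
proof
  assume "p \<in> FA n" "q \<in> FA n" "cls n r p = cls n r q"
  then have "p \<in> cls n r q" using cls_mem by metis
  then show "cg n r p q" by (simp add: cls_def cg_def)
next
  assume "p \<in> FA n" "q \<in> FA n" "cg n r p q"
  then show "cls n r p = cls n r q" unfolding cls_def
    by (auto intro: cg_trans cg_sym simp: cg_def[symmetric])
qed
lemma cls_eqI: "p \<in> FA n \<Longrightarrow> q \<in> FA n \<Longrightarrow> cg n r p q \<Longrightarrow> cls n r p = cls n r q"
  by (simp add: cls_eq_iff)

lemma Tadd_cls: "p \<in> FA n \<Longrightarrow> q \<in> FA n \<Longrightarrow> Tadd n r (cls n r p) (cls n r q) = cls n r (p + q)"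
  unfolding Tadd_def using rep_cls[of p n r] rep_cls[of q n r] by (intro cls_eqI) (auto intro: cg_add)
lemma Tmul_cls: "p \<in> FA n \<Longrightarrow> q \<in> FA n \<Longrightarrow> Tmul n r (cls n r p) (cls n r q) = cls n r (p * q)"
  unfolding Tmul_def fmul_eq using rep_cls[of p n r] rep_cls[of q n r] by (intro cls_eqI) (auto intro: cg_mult)
lemma Tsmul_cls: "p \<in> FA n \<Longrightarrow> Tsmul n r c (cls n r p) = cls n r (C c * p)"
  unfolding Tsmul_def fsc_eq using rep_cls[of p n r] by (intro cls_eqI) (auto intro: cg_C)
lemma Tone_cls: "Tone n r = cls n r 1" by (simp add: Tone_def fone_eq)
lemma Tgen_cls: "Tgen n r g = cls n r (sg [g] 1)" by (simp add: Tgen_def fgen_def)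
lemma Tcar_iff: "A \<in> Tcar n r \<longleftrightarrow> (\<exists>p\<in>FA n. A = cls n r p)"
  by (auto simp: Tcar_def)
lemma cls_Tcar[simp]: "p \<in> FA n \<Longrightarrow> cls n r p \<in> Tcar n r"
  by (auto simp: Tcar_def)




definition wc :: "nat \<Rightarrow> nat \<Rightarrow> gen list \<Rightarrow> gen list \<Rightarrow> bool" where
  "wc n r x y \<longleftrightarrow> cg n r (sg x 1) (sg y 1)"

lemma wc_refl[simp]: "wc n r x x" by (simp add: wc_def)
lemma wc_sym: "wc n r x y \<Longrightarrow> wc n r y x" by (simp add: wc_def cg_sym)
lemma wc_trans: "wc n r x y \<Longrightarrow> wc n r y z \<Longrightarrow> wc n r x z" unfolding wc_def by (rule cg_trans)

lemma cg_ctx: "cg n r p q \<Longrightarrow> a \<in> FA n \<Longrightarrow> b \<in> FA n \<Longrightarrow> cg n r (a * p * b) (a * q * b)"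
  unfolding cg_def using Id_mult[of "p - q" n r a b] by (simp add: algebra_simps)

lemmas [trans] = wc_trans cg_trans

lemma wc_ctx: "wc n r x y \<Longrightarrow> fw n u \<Longrightarrow> fw n w \<Longrightarrow> wc n r (u @ x @ w) (u @ y @ w)"
  unfolding wc_def using cg_ctx[of n r "sg x 1" "sg y 1" "sg u 1" "sg w 1"] by (simp add: sg_mult)

lemma rel_in_Id: "p \<in> Rels n r \<Longrightarrow> p \<in> Id n r" by (rule Id.rel)

lemma fgen2: "fmul (fgen a) (fgen b) = sg [a, b] 1"
  by (simp add: fmul_eq fgen_def sg_mult)

lemma wc_KK: "i < n \<Longrightarrow> j < n \<Longrightarrow> wc n r [GK i, GK j] [GK j, GK i]"
proof -
  assume "i < n" "j < n"
  then have "fmul (fK i) (fK j) - fmul (fK j) (fK i) \<in> Rels n r" unfolding Rels_def by blast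
  then show ?thesis by (simp add: wc_def cg_def fgen2 rel_in_Id)
qed

lemma wc_KKi: "i < n \<Longrightarrow> wc n r [GK i, GKi i] []"
proof -
  assume "i < n"
  then have "fmul (fK i) (fKi i) - fone \<in> Rels n r" unfolding Rels_def by blast
  then show ?thesis by (simp add: wc_def cg_def fgen2 rel_in_Id fone_def)
qed

lemma wc_KiK: "i < n \<Longrightarrow> wc n r [GKi i, GK i] []"
proof -
  assume "i < n"
  then have "fmul (fKi i) (fK i) - fone \<in> Rels n r" unfolding Rels_def by blast
  then show ?thesis by (simp add: wc_def cg_def fgen2 rel_in_Id fone_def)
qed

lemma wc_KKi_comm: assumes "a < n" "b < n" shows "wc n r [GK a, GKi b] [GKi b, GK a]"
proof -
  have "wc n r [GK a, GKi b] ([GKi b, GK b] @ [GK a, GKi b])"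
    using wc_ctx[OF wc_sym[OF wc_KiK[of b n r]], of "[]" "[GK a, GKi b]"] assms by simp
  also have "wc n r \<dots> ([GKi b] @ [GK a, GK b] @ [GKi b])"
    using wc_ctx[OF wc_KK[of b n a r], of "[GKi b]" "[GKi b]"] assms by simp
  also have "wc n r \<dots> ([GKi b, GK a] @ [] @ [])"
    using wc_ctx[OF wc_KKi[of b n r], of "[GKi b, GK a]" "[]"] assms by simp
  finally show ?thesis by simp
qed

lemma wc_KiKi_comm: assumes "a < n" "b < n" shows "wc n r [GKi a, GKi b] [GKi b, GKi a]"
proof -
  have "wc n r [GKi a, GKi b] ([GKi b, GK b] @ [GKi a, GKi b])"
    using wc_ctx[OF wc_sym[OF wc_KiK[of b n r]], of "[]" "[GKi a, GKi b]"] assms by simp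
  also have "wc n r \<dots> ([GKi b] @ [GKi a, GK b] @ [GKi b])"
    using wc_ctx[OF wc_KKi_comm[of b n a r], of "[GKi b]" "[GKi b]"] assms by simp
  also have "wc n r \<dots> ([GKi b, GKi a] @ [] @ [])"
    using wc_ctx[OF wc_KKi[of b n r], of "[GKi b, GKi a]" "[]"] assms by simp
  finally show ?thesis by simp
qed

definition Kl :: "nat \<Rightarrow> gen \<Rightarrow> bool" where "Kl n g \<longleftrightarrow> (\<exists>i<n. g = GK i \<or> g = GKi i)"
definition Kw :: "nat \<Rightarrow> gen list \<Rightarrow> bool" where "Kw n w \<longleftrightarrow> (\<forall>g\<in>set w. Kl n g)"
definition Kp :: "nat \<Rightarrow> fa \<Rightarrow> bool" where "Kp n p \<longleftrightarrow> (\<forall>w\<in>ks p. Kw n w)"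

lemma Kw_simps[simp]: "Kw n []" "Kw n (g # w) \<longleftrightarrow> Kl n g \<and> Kw n w" "Kw n (u @ w) \<longleftrightarrow> Kw n u \<and> Kw n w"
  by (auto simp: Kw_def)
lemma Kl_idx: "Kl n g \<Longrightarrow> gidx g < n" by (auto simp: Kl_def)
lemma Kw_fw: "Kw n w \<Longrightarrow> fw n w" by (auto simp: Kw_def fw_def Kl_idx)

lemma wc_letter: "Kl n a \<Longrightarrow> Kl n b \<Longrightarrow> wc n r [a, b] [b, a]"
  unfolding Kl_def
  by (auto intro: wc_KK wc_KiKi_comm wc_KKi_comm wc_sym[OF wc_KKi_comm])

lemma wc_move: "Kl n a \<Longrightarrow> Kw n w \<Longrightarrow> wc n r (a # w) (w @ [a])"
proof (induct w)
  case (Cons b w)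
  have "wc n r ([] @ [a, b] @ w) ([] @ [b, a] @ w)"
    using Cons by (intro wc_ctx wc_letter) (auto simp: Kw_fw)
  also have "wc n r ([] @ [b, a] @ w) ([b] @ (w @ [a]) @ [])"
    using Cons wc_ctx[of n r "a # w" "w @ [a]" "[b]" "[]"] by (simp add: Kl_idx)
  finally show ?case by simp
qed simp

lemma wc_swap: "Kw n u \<Longrightarrow> Kw n w \<Longrightarrow> wc n r (u @ w) (w @ u)"
proof (induct u)
  case (Cons a u)
  have "wc n r ([a] @ (u @ w) @ []) ([a] @ (w @ u) @ [])"
    using Cons by (intro wc_ctx) (auto simp: Kl_idx)
  also have "wc n r ([a] @ (w @ u) @ []) ([] @ (w @ [a]) @ u)"
    using Cons wc_ctx[OF wc_move[of n a w r], of "[]" u] by (simp add: Kw_fw)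
  finally show ?case by simp
qed simp

lemma Kp_FA: "Kp n p \<Longrightarrow> p \<in> FA n" by (auto simp: Kp_def FA_iff Kw_fw)
lemma Kp_0[simp]: "Kp n 0" by (simp add: Kp_def)
lemma Kp_sg[simp]: "Kw n w \<Longrightarrow> Kp n (sg w c)" by (simp add: Kp_def)
lemma Kp_add[simp]: "Kp n p \<Longrightarrow> Kp n q \<Longrightarrow> Kp n (p + q)"
  using keys_add[of p q] by (auto simp: Kp_def)
lemma Kp_uminus[simp]: "Kp n p \<Longrightarrow> Kp n (- p)" by (simp add: Kp_def keys_minus)
lemma Kp_diff[simp]: "Kp n p \<Longrightarrow> Kp n q \<Longrightarrow> Kp n (p - q)"
  by (metis Kp_add Kp_uminus diff_conv_add_uminus)
lemma Kp_mult[simp]: "Kp n p \<Longrightarrow> Kp n q \<Longrightarrow> Kp n (p * q)"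
  using keys_mult[of p q] by (fastforce simp: Kp_def plus_list_def)
lemma Kp_1[simp]: "Kp n 1" by (simp add: one_fa)
lemma Kp_prod_list[simp]: "(\<And>x. x \<in> set xs \<Longrightarrow> Kp n x) \<Longrightarrow> Kp n (prod_list xs)"
  by (induct xs) auto

lemma cg_sum: "finite A \<Longrightarrow> (\<And>a. a \<in> A \<Longrightarrow> cg n r (f a) (g a)) \<Longrightarrow> cg n r (sum f A) (sum g A)"
  by (induct A rule: finite_induct) (auto intro: cg_add)

lemma cg_comm: assumes "Kp n p" "Kp n q" shows "cg n r (p * q) (q * p)"
proof -
  have e1: "p * q = (\<Sum>u\<in>ks p. \<Sum>w\<in>ks q. sg u (lk p u) * sg w (lk q w))"
  proof -
    have "p * q = (\<Sum>u\<in>ks p. sg u (lk p u)) * (\<Sum>w\<in>ks q. sg w (lk q w))"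
      by (simp only: fa_expand)
    then show ?thesis by (simp only: sum_product)
  qed
  have e2: "q * p = (\<Sum>u\<in>ks p. \<Sum>w\<in>ks q. sg w (lk q w) * sg u (lk p u))"
  proof -
    have "q * p = (\<Sum>w\<in>ks q. sg w (lk q w)) * (\<Sum>u\<in>ks p. sg u (lk p u))"
      by (simp only: fa_expand)
    then show ?thesis by (simp only: sum_product sum.swap[of _ "ks q"])
  qed
  have "cg n r (sg u (lk p u) * sg w (lk q w)) (sg w (lk q w) * sg u (lk p u))"
    if "u \<in> ks p" "w \<in> ks q" for u w
  proof -
    have "Kw n u" "Kw n w" using that assms by (auto simp: Kp_def)
    then have "cg n r (sg (u @ w) 1) (sg (w @ u) 1)" using wc_swap wc_def by blast
    then have "cg n r (C (lk p u * lk q w) * sg (u @ w) 1) (C (lk p u * lk q w) * sg (w @ u) 1)"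
      by (rule cg_C)
    then show ?thesis by (simp add: sg_mult mult.commute)
  qed
  then show ?thesis unfolding e1 e2 by (auto intro!: cg_sum)
qed

lemma cg_prod_rev: "(\<And>x. x \<in> set xs \<Longrightarrow> Kp n x) \<Longrightarrow> cg n r (prod_list (rev xs)) (prod_list xs)"
proof (induct xs)
  case (Cons a xs)
  have "cg n r (prod_list (rev xs) * a) (prod_list xs * a)"
    using Cons by (intro cg_mult) (auto intro: Kp_FA)
  also have "cg n r (prod_list xs * a) (a * prod_list xs)"
    using Cons by (intro cg_comm) auto
  finally show ?case by simp
qed simp

lemma cg_prod_swap: "(\<And>x. x \<in> set xs \<Longrightarrow> Kp n x) \<Longrightarrow> (\<And>x. x \<in> set ys \<Longrightarrow> Kp n x) \<Longrightarrow>
   cg n r (prod_list (xs @ ys)) (prod_list (ys @ xs))"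
  using cg_comm[of n "prod_list xs" "prod_list ys" r] by simp

lemma vv_ne0: "vv \<noteq> 0"
  by (simp add: vv_def Zero_fract_def eq_fract)
lemma vv_ne1: "vv \<noteq> 1"
proof -
  have "[:0, 1:] \<noteq> (1 :: rat poly)"
  proof
    assume "[:0, 1:] = (1 :: rat poly)"
    then have "degree ([:0, 1:] :: rat poly) = 0" by simp
    then show False by simp
  qed
  then show ?thesis by (simp add: vv_def One_fract_def eq_fract)
qed
lemma vv_sq_ne1: "vv * vv \<noteq> 1"
proof -
  have "[:0, 1:] * [:0, 1:] \<noteq> (1 :: rat poly)"
  proof
    assume "[:0, 1:] * [:0, 1:] = (1 :: rat poly)"
    then have "degree ([:0, 1:] * [:0, 1:] :: rat poly) = 0" by simp
    then show False by (subst (asm) degree_mult_eq) auto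
  qed
  then show ?thesis by (simp add: vv_def One_fract_def eq_fract mult_fract)
qed
lemma vv_diff_ne0: "vv - 1 / vv \<noteq> 0"
  using vv_ne0 vv_sq_ne1 by (auto simp: field_simps)



fun shg :: "nat \<Rightarrow> gen \<Rightarrow> gen" where
  "shg n (GE i) = GE ((i + 1) mod n)" | "shg n (GF i) = GF ((i + 1) mod n)"
| "shg n (GK i) = GK ((i + 1) mod n)" | "shg n (GKi i) = GKi ((i + 1) mod n)"

fun swg :: "gen \<Rightarrow> gen" where
  "swg (GE i) = GF i" | "swg (GF i) = GE i" | "swg (GK i) = GK i" | "swg (GKi i) = GKi i"

definition fnu :: "nat \<Rightarrow> gen list \<Rightarrow> gen list" where "fnu n w = map (shg n) w"
definition fsig :: "gen list \<Rightarrow> gen list" where "fsig w = rev (map swg w)"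
lemma fnu_Nil[simp]: "fnu n [] = []" by (simp add: fnu_def)
lemma fsig_Nil[simp]: "fsig [] = []" by (simp add: fsig_def)
abbreviation NU :: "nat \<Rightarrow> fa \<Rightarrow> fa" where "NU n \<equiv> subst (fnu n)"
abbreviation SIG :: "fa \<Rightarrow> fa" where "SIG \<equiv> subst fsig"

lemma NU_mult[simp]: "NU n (p * q) = NU n p * NU n q" by (rule subst_mult) (simp add: fnu_def)
lemma SIG_mult[simp]: "SIG (p * q) = SIG q * SIG p" by (rule subst_mult_anti) (simp add: fsig_def)
lemma NU_fmul[simp]: "NU n (fmul p q) = fmul (NU n p) (NU n q)" by (simp add: fmul_eq)
lemma SIG_fmul[simp]: "SIG (fmul p q) = fmul (SIG q) (SIG p)" by (simp add: fmul_eq)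
lemma NU_C[simp]: "NU n (C c) = C c" by (simp add: fnu_def)
lemma SIG_C[simp]: "SIG (C c) = C c" by (simp add: fsig_def)
lemma NU_1[simp]: "NU n 1 = 1" by (simp add: one_fa fnu_def)
lemma SIG_1[simp]: "SIG 1 = 1" by (simp add: one_fa fsig_def)
lemma NU_fsc[simp]: "NU n (fsc c p) = fsc c (NU n p)" by (simp add: fsc_eq)
lemma SIG_fsc[simp]: "SIG (fsc c p) = fsc c (SIG p)" by (simp add: fsc_eq C_comm)
lemma NU_fgen[simp]: "NU n (fgen g) = fgen (shg n g)" by (simp add: fgen_def fnu_def)
lemma SIG_fgen[simp]: "SIG (fgen g) = fgen (swg g)" by (simp add: fgen_def fsig_def)
lemma NU_fone[simp]: "NU n fone = fone" by (simp add: fone_eq)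
lemma SIG_fone[simp]: "SIG fone = fone" by (simp add: fone_eq)
lemma NU_prod_list: "NU n (prod_list xs) = prod_list (map (NU n) xs)" by (induct xs) auto
lemma SIG_prod_list: "SIG (prod_list xs) = prod_list (rev (map SIG xs))" by (induct xs) auto
lemma NU_fprod[simp]: "NU n (fprod xs) = fprod (map (NU n) xs)" by (simp add: fprod_eq NU_prod_list)
lemma SIG_fprod[simp]: "SIG (fprod xs) = fprod (rev (map SIG xs))" by (simp add: fprod_eq SIG_prod_list)

lemma keys_subst: "ks (subst f p) \<subseteq> f ` ks p"
proof -
  have "ks (subst f p) \<subseteq> (\<Union>x\<in>ks p. ks (sg (f x) (lk p x)))"
    unfolding subst_def by (rule keys_sum)
  also have "\<dots> \<subseteq> f ` ks p" by auto
  finally show ?thesis .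
qed

lemma shg_idx: "0 < n \<Longrightarrow> gidx (shg n g) < n" by (cases g) auto
lemma swg_idx: "gidx (swg g) = gidx g" by (cases g) auto

lemma NU_FA[simp]: "0 < n \<Longrightarrow> p \<in> FA n \<Longrightarrow> NU n p \<in> FA n"
  using keys_subst[of "fnu n" p] by (fastforce simp: FA_iff fw_def shg_idx fnu_def)
lemma SIG_FA[simp]: "p \<in> FA n \<Longrightarrow> SIG p \<in> FA n"
  using keys_subst[of "fsig" p] by (fastforce simp: FA_iff fw_def swg_idx fsig_def)

lemma mod_suc_if: "(k::nat) < n \<Longrightarrow> (k + 1) mod n = (if k + 1 = n then 0 else k + 1)"
  by auto

lemma mod_suc_inj: "(i::nat) < n \<Longrightarrow> j < n \<Longrightarrow> ((i + 1) mod n = (j + 1) mod n) \<longleftrightarrow> i = j"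
  using mod_suc_if[of i n] mod_suc_if[of j n] by (auto split: if_splits)

lemma pred_iff: "(i::nat) < n \<Longrightarrow> j < n \<Longrightarrow> (j = (i + n - 1) mod n \<longleftrightarrow> i = (j + 1) mod n)"
  using mod_suc_if[of j n] by (cases "i = 0") (auto simp: mod_if split: if_splits)

lemma mod_suc_suc: "(((i::nat) + 1) mod n + 1) mod n = (i + 2) mod n"
  by (metis mod_add_left_eq add.assoc one_add_one)

lemma epsp_alt: "i < n \<Longrightarrow> j < n \<Longrightarrow> epsp n i j = (if j = i then 1 else if i = (j + 1) mod n then -1 else 0)"
  by (simp only: epsp_def pred_iff)

lemma epsp_shift[simp]: "i < n \<Longrightarrow> j < n \<Longrightarrow> epsp n ((i + 1) mod n) ((j + 1) mod n) = epsp n i j"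
proof -
  assume a: "i < n" "j < n"
  then have n: "0 < n" by simp
  have e2: "((i + 1) mod n = ((j + 1) mod n + 1) mod n) \<longleftrightarrow> i = (j + 1) mod n"
    using mod_suc_inj[OF a(1), of "(j + 1) mod n"] n by simp
  have e1: "((j + 1) mod n = (i + 1) mod n) \<longleftrightarrow> j = i" using mod_suc_inj a by blast
  have l: "(i + 1) mod n < n" "(j + 1) mod n < n" using n by auto
  show ?thesis
    by (simp only: epsp_alt[OF l] epsp_alt[OF a] e1 e2)
qed

lemma adj_shift[simp]: "i < n \<Longrightarrow> j < n \<Longrightarrow> adj n ((i + 1) mod n) ((j + 1) mod n) \<longleftrightarrow> adj n i j"
proof -
  assume a: "i < n" "j < n"
  then have n: "0 < n" by simp
  have "((j + 1) mod n = ((i + 1) mod n + 1) mod n) \<longleftrightarrow> j = (i + 1) mod n"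
    using mod_suc_inj[OF a(2), of "(i + 1) mod n"] n by simp
  moreover have "((i + 1) mod n = ((j + 1) mod n + 1) mod n) \<longleftrightarrow> i = (j + 1) mod n"
    using mod_suc_inj[OF a(1), of "(j + 1) mod n"] n by simp
  ultimately show ?thesis by (simp add: adj_def)
qed

lemma adj_sym: "adj n i j \<longleftrightarrow> adj n j i" by (auto simp: adj_def)


lemma mod_suc_inj'[simp]: "(i::nat) < n \<Longrightarrow> j < n \<Longrightarrow> (Suc i mod n = Suc j mod n) \<longleftrightarrow> i = j"
  using mod_suc_inj by simp
lemma epsp_shift'[simp]: "i < n \<Longrightarrow> j < n \<Longrightarrow> epsp n (Suc i mod n) (Suc j mod n) = epsp n i j"
  using epsp_shift by simp
lemma adj_shift'[simp]: "i < n \<Longrightarrow> j < n \<Longrightarrow> adj n (Suc i mod n) (Suc j mod n) \<longleftrightarrow> adj n i j"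
  using adj_shift by simp

lemma R1: "i < n \<Longrightarrow> j < n \<Longrightarrow> fmul (fK i) (fK j) - fmul (fK j) (fK i) \<in> Id n r"
  by (rule rel_in_Id) (unfold Rels_def, blast)
lemma R2: "i < n \<Longrightarrow> fmul (fK i) (fKi i) - fone \<in> Id n r"
  by (rule rel_in_Id) (unfold Rels_def, blast)
lemma R3: "i < n \<Longrightarrow> fmul (fKi i) (fK i) - fone \<in> Id n r"
  by (rule rel_in_Id) (unfold Rels_def, blast)
lemma R4: "i < n \<Longrightarrow> j < n \<Longrightarrow> fmul (fK i) (fE j) - fsc (vv powi epsp n i j) (fmul (fE j) (fK i)) \<in> Id n r"
  by (rule rel_in_Id) (unfold Rels_def, blast)
lemma R5: "i < n \<Longrightarrow> j < n \<Longrightarrow> fmul (fK i) (fF j) - fsc (vv powi (- epsp n i j)) (fmul (fF j) (fK i)) \<in> Id n r"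
  by (rule rel_in_Id) (unfold Rels_def, blast)
lemma R6: "i < n \<Longrightarrow> j < n \<Longrightarrow> fmul (fE i) (fF j) - fmul (fF j) (fE i)
        - (if i = j then fsc (1 / (vv - 1 / vv))
              (fmul (fK i) (fKi ((i + 1) mod n)) - fmul (fKi i) (fK ((i + 1) mod n)))
           else 0) \<in> Id n r"
  by (rule rel_in_Id) (unfold Rels_def, blast)
lemma R7: "i < n \<Longrightarrow> j < n \<Longrightarrow> \<not> adj n i j \<Longrightarrow> fmul (fE i) (fE j) - fmul (fE j) (fE i) \<in> Id n r"
  by (rule rel_in_Id) (unfold Rels_def, blast)
lemma R8: "i < n \<Longrightarrow> j < n \<Longrightarrow> \<not> adj n i j \<Longrightarrow> fmul (fF i) (fF j) - fmul (fF j) (fF i) \<in> Id n r"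
  by (rule rel_in_Id) (unfold Rels_def, blast)
lemma R9: "i < n \<Longrightarrow> j < n \<Longrightarrow> adj n i j \<Longrightarrow> fprod [fE i, fE i, fE j] - fsc (vv + 1 / vv) (fprod [fE i, fE j, fE i])
        + fprod [fE j, fE i, fE i] \<in> Id n r"
  by (rule rel_in_Id) (unfold Rels_def, blast)
lemma R10: "i < n \<Longrightarrow> j < n \<Longrightarrow> adj n i j \<Longrightarrow> fprod [fF i, fF i, fF j] - fsc (vv + 1 / vv) (fprod [fF i, fF j, fF i])
        + fprod [fF j, fF i, fF i] \<in> Id n r"
  by (rule rel_in_Id) (unfold Rels_def, blast)
lemma R11: "fprod (map fK [0..<n]) - fsc (vv ^ r) fone \<in> Id n r"
  by (rule rel_in_Id) (unfold Rels_def, blast)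
lemma R12: "i < n \<Longrightarrow> fprod (map (\<lambda>j. fK i - fsc (vv ^ j) fone) [0..<r + 1]) \<in> Id n r"
  by (rule rel_in_Id) (unfold Rels_def, blast)


lemma suc_mod_lt[simp]: "(i::nat) < n \<Longrightarrow> Suc i mod n < n" by simp

lemma Id_cg: "cg n r p q \<Longrightarrow> q \<in> Id n r \<Longrightarrow> p \<in> Id n r"
  unfolding cg_def using Id.add[of "p - q" n r q] by simp

lemma NU_R1: "i < n \<Longrightarrow> j < n \<Longrightarrow> NU n (fmul (fK i) (fK j) - fmul (fK j) (fK i)) \<in> Id n r"
  using R1[of "(i+1) mod n" n "(j+1) mod n" r] by simp
lemma NU_R2: "i < n \<Longrightarrow> NU n (fmul (fK i) (fKi i) - fone) \<in> Id n r"
  using R2[of "(i+1) mod n" n r] by simp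
lemma NU_R3: "i < n \<Longrightarrow> NU n (fmul (fKi i) (fK i) - fone) \<in> Id n r"
  using R3[of "(i+1) mod n" n r] by simp
lemma NU_R4: "i < n \<Longrightarrow> j < n \<Longrightarrow> NU n (fmul (fK i) (fE j) - fsc (vv powi epsp n i j) (fmul (fE j) (fK i))) \<in> Id n r"
  using R4[of "(i+1) mod n" n "(j+1) mod n" r] by simp
lemma NU_R5: "i < n \<Longrightarrow> j < n \<Longrightarrow> NU n (fmul (fK i) (fF j) - fsc (vv powi (- epsp n i j)) (fmul (fF j) (fK i))) \<in> Id n r"
  using R5[of "(i+1) mod n" n "(j+1) mod n" r] by simp
lemma NU_R6: "i < n \<Longrightarrow> j < n \<Longrightarrow> NU n (fmul (fE i) (fF j) - fmul (fF j) (fE i)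
        - (if i = j then fsc (1 / (vv - 1 / vv))
              (fmul (fK i) (fKi ((i + 1) mod n)) - fmul (fKi i) (fK ((i + 1) mod n)))
           else 0)) \<in> Id n r"
  using R6[of "(i+1) mod n" n "(j+1) mod n" r] by (cases "i = j") simp_all
lemma NU_R7: "i < n \<Longrightarrow> j < n \<Longrightarrow> \<not> adj n i j \<Longrightarrow> NU n (fmul (fE i) (fE j) - fmul (fE j) (fE i)) \<in> Id n r"
  using R7[of "(i+1) mod n" n "(j+1) mod n" r] by simp
lemma NU_R8: "i < n \<Longrightarrow> j < n \<Longrightarrow> \<not> adj n i j \<Longrightarrow> NU n (fmul (fF i) (fF j) - fmul (fF j) (fF i)) \<in> Id n r"
  using R8[of "(i+1) mod n" n "(j+1) mod n" r] by simp
lemma NU_R9: "i < n \<Longrightarrow> j < n \<Longrightarrow> adj n i j \<Longrightarrow> NU n (fprod [fE i, fE i, fE j] - fsc (vv + 1 / vv) (fprod [fE i, fE j, fE i])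
        + fprod [fE j, fE i, fE i]) \<in> Id n r"
  using R9[of "(i+1) mod n" n "(j+1) mod n" r] by simp
lemma NU_R10: "i < n \<Longrightarrow> j < n \<Longrightarrow> adj n i j \<Longrightarrow> NU n (fprod [fF i, fF i, fF j] - fsc (vv + 1 / vv) (fprod [fF i, fF j, fF i])
        + fprod [fF j, fF i, fF i]) \<in> Id n r"
  using R10[of "(i+1) mod n" n "(j+1) mod n" r] by simp
lemma NU_R12: "i < n \<Longrightarrow> NU n (fprod (map (\<lambda>j. fK i - fsc (vv ^ j) fone) [0..<r + 1])) \<in> Id n r"
  using R12[of "(i+1) mod n" n r] by (simp add: o_def)

lemma Kp_fK[simp]: "i < n \<Longrightarrow> Kp n (fK i)" by (simp add: fgen_def Kl_def)
lemma Kp_fKi[simp]: "i < n \<Longrightarrow> Kp n (fKi i)" by (simp add: fgen_def Kl_def)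
lemma Kp_C[simp]: "Kp n (C c)" by simp

lemma map_rot: "0 < n \<Longrightarrow> map (\<lambda>i. f (Suc i mod n)) [0..<n] = map f [1..<n] @ [f 0]"
proof (induct n)
  case (Suc m)
  show ?case
  proof (cases "m = 0")
    case False
    have "map (\<lambda>i. f (Suc i mod Suc m)) [0..<m] = map f [1..<m] @ [f m]"
    proof -
      have "map (\<lambda>i. f (Suc i mod Suc m)) [0..<m] = map (\<lambda>i. f (Suc i)) [0..<m]"
        by (rule map_cong) auto
      also have "\<dots> = map f (map Suc [0..<m])" by simp
      also have "\<dots> = map f [1..<Suc m]" by (simp only: map_Suc_upt One_nat_def)
      also have "\<dots> = map f [1..<m] @ [f m]" using False by simp
      finally show ?thesis .
    qed
    then show ?thesis using False by simp
  qed simp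
qed simp

lemma NU_R11: "0 < n \<Longrightarrow> NU n (fprod (map fK [0..<n]) - fsc (vv ^ r) fone) \<in> Id n r"
proof -
  assume n: "0 < n"
  let ?f = "\<lambda>i. fK i"
  have e: "NU n (fprod (map fK [0..<n]) - fsc (vv ^ r) fone)
     = prod_list (map ?f [1..<n] @ [?f 0]) - fsc (vv ^ r) fone"
    using map_rot[OF n, of ?f] by (simp add: o_def fprod_eq NU_prod_list)
  have m0: "map ?f [0..<n] = [?f 0] @ map ?f [1..<n]" using n by (simp add: upt_conv_Cons)
  have "cg n r (prod_list (map ?f [1..<n] @ [?f 0])) (prod_list ([?f 0] @ map ?f [1..<n]))"
    by (rule cg_prod_swap) (auto simp: n)
  then have "cg n r (prod_list (map ?f [1..<n] @ [?f 0]) - fsc (vv ^ r) fone) (prod_list (map ?f [0..<n]) - fsc (vv ^ r) fone)"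
    unfolding m0[symmetric] by (intro cg_diff) auto
  then have "cg n r (NU n (fprod (map fK [0..<n]) - fsc (vv ^ r) fone)) (fprod (map fK [0..<n]) - fsc (vv ^ r) fone)"
    using e by (simp only: fprod_eq)
  then show ?thesis using R11 Id_cg by blast
qed


lemma NU_Rels: assumes "0 < n" "p \<in> Rels n r" shows "NU n p \<in> Id n r"
  using assms(2) unfolding Rels_def
  apply (elim UnE CollectE exE conjE insertE emptyE)
  apply (simp_all only:)
  apply (rule NU_R1; assumption)
  apply (rule NU_R2; assumption)
  apply (rule NU_R3; assumption)
  apply (rule NU_R4; assumption)
  apply (rule NU_R5; assumption)
  apply (rule NU_R6; assumption)
  apply (rule NU_R7; assumption)
  apply (rule NU_R8; assumption)
  apply (rule NU_R9; assumption)
  apply (rule NU_R10; assumption)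
  apply (rule NU_R11, rule assms(1))
  apply (rule NU_R12; assumption)
  done

lemma NU_Id: assumes "0 < n" "p \<in> Id n r" shows "NU n p \<in> Id n r"
  using assms(2)
proof induct
  case (rel p) then show ?case using NU_Rels assms(1) by blast
next
  case zero then show ?case by (simp add: Id.zero)
next
  case (add p q) then show ?case by (simp add: Id.add)
next
  case (smul p c) then show ?case by (simp add: Id.smul)
next
  case (mul p a b) then show ?case using assms(1) by (simp add: Id.mul)
qed


lemma swap_scal: "c * d = 1 \<Longrightarrow> b - fsc c a = fsc (-c) (a - fsc d b)"
proof -
  assume cd: "c * d = 1"
  have "fsc (-c) (a - fsc d b) = C (-c) * a - C (-c) * C d * b"
    by (simp add: fsc_eq algebra_simps)
  also have "\<dots> = - (C c * a) + b"
    using cd by (simp add: C_mult single_uminus one_fa[symmetric])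
  finally show ?thesis by (simp add: fsc_eq)
qed

lemma powi_inv: "vv powi e * vv powi (- e) = 1"
  using vv_ne0 by (simp add: power_int_minus)

lemma SIG_R1: "i < n \<Longrightarrow> j < n \<Longrightarrow> SIG (fmul (fK i) (fK j) - fmul (fK j) (fK i)) \<in> Id n r"
  using R1[of j n i r] by simp
lemma SIG_R2: "i < n \<Longrightarrow> SIG (fmul (fK i) (fKi i) - fone) \<in> Id n r"
  using R3[of i n r] by simp
lemma SIG_R3: "i < n \<Longrightarrow> SIG (fmul (fKi i) (fK i) - fone) \<in> Id n r"
  using R2[of i n r] by simp
lemma SIG_R4: "i < n \<Longrightarrow> j < n \<Longrightarrow> SIG (fmul (fK i) (fE j) - fsc (vv powi epsp n i j) (fmul (fE j) (fK i))) \<in> Id n r"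
proof -
  assume a: "i < n" "j < n"
  have "SIG (fmul (fK i) (fE j) - fsc (vv powi epsp n i j) (fmul (fE j) (fK i)))
     = fsc (- (vv powi epsp n i j)) (fmul (fK i) (fF j) - fsc (vv powi (- epsp n i j)) (fmul (fF j) (fK i)))"
    by (simp add: swap_scal powi_inv)
  then show ?thesis using Id.smul[OF R5[OF a]] by simp
qed
lemma SIG_R5: "i < n \<Longrightarrow> j < n \<Longrightarrow> SIG (fmul (fK i) (fF j) - fsc (vv powi (- epsp n i j)) (fmul (fF j) (fK i))) \<in> Id n r"
proof -
  assume a: "i < n" "j < n"
  have "SIG (fmul (fK i) (fF j) - fsc (vv powi (- epsp n i j)) (fmul (fF j) (fK i)))
     = fsc (- (vv powi (- epsp n i j))) (fmul (fK i) (fE j) - fsc (vv powi epsp n i j) (fmul (fE j) (fK i)))"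
    using powi_inv[of "- epsp n i j"] by (simp add: swap_scal)
  then show ?thesis using Id.smul[OF R4[OF a]] by simp
qed

lemma cg_fmul_gen: "wc n r [a, b] [c, d] \<Longrightarrow> cg n r (fmul (fgen a) (fgen b)) (fmul (fgen c) (fgen d))"
  by (simp add: wc_def fgen2)

lemma SIG_R6: "i < n \<Longrightarrow> j < n \<Longrightarrow> SIG (fmul (fE i) (fF j) - fmul (fF j) (fE i)
        - (if i = j then fsc (1 / (vv - 1 / vv))
              (fmul (fK i) (fKi ((i + 1) mod n)) - fmul (fKi i) (fK ((i + 1) mod n)))
           else 0)) \<in> Id n r"
proof (cases "i = j")
  case False
  assume a: "i < n" "j < n"
  then show ?thesis using R6[of j n i r] False by simp
next
  case True
  assume a: "i < n" "j < n"
  let ?i = "(i + 1) mod n"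
  have i': "?i < n" using a by simp
  have c1: "cg n r (fmul (fKi ?i) (fK i)) (fmul (fK i) (fKi ?i))"
    by (rule cg_fmul_gen, rule wc_sym, rule wc_KKi_comm[OF a(1) i'])
  have c2: "cg n r (fmul (fK ?i) (fKi i)) (fmul (fKi i) (fK ?i))"
    by (rule cg_fmul_gen, rule wc_KKi_comm[OF i' a(1)])
  have "cg n r (fmul (fE i) (fF i) - fmul (fF i) (fE i) - fsc (1 / (vv - 1 / vv)) (fmul (fKi ?i) (fK i) - fmul (fK ?i) (fKi i)))
      (fmul (fE i) (fF i) - fmul (fF i) (fE i) - fsc (1 / (vv - 1 / vv)) (fmul (fK i) (fKi ?i) - fmul (fKi i) (fK ?i)))"
    unfolding fsc_eq by (intro cg_diff cg_refl cg_C c1 c2)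
  moreover have "SIG (fmul (fE i) (fF j) - fmul (fF j) (fE i)
        - (if i = j then fsc (1 / (vv - 1 / vv))
              (fmul (fK i) (fKi ((i + 1) mod n)) - fmul (fKi i) (fK ((i + 1) mod n)))
           else 0)) = fmul (fE i) (fF i) - fmul (fF i) (fE i) - fsc (1 / (vv - 1 / vv)) (fmul (fKi ?i) (fK i) - fmul (fK ?i) (fKi i))"
    using True by simp
  ultimately show ?thesis using R6[OF a(1) a(1), of r] Id_cg by (simp add: True)
qed
lemma SIG_R7: "i < n \<Longrightarrow> j < n \<Longrightarrow> \<not> adj n i j \<Longrightarrow> SIG (fmul (fE i) (fE j) - fmul (fE j) (fE i)) \<in> Id n r"
  using R8[of j n i r] by (simp add: adj_sym)
lemma SIG_R8: "i < n \<Longrightarrow> j < n \<Longrightarrow> \<not> adj n i j \<Longrightarrow> SIG (fmul (fF i) (fF j) - fmul (fF j) (fF i)) \<in> Id n r"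
  using R7[of j n i r] by (simp add: adj_sym)
lemma SIG_R9: "i < n \<Longrightarrow> j < n \<Longrightarrow> adj n i j \<Longrightarrow> SIG (fprod [fE i, fE i, fE j] - fsc (vv + 1 / vv) (fprod [fE i, fE j, fE i])
        + fprod [fE j, fE i, fE i]) \<in> Id n r"
  using R10[of i n j r] by (simp add: algebra_simps)
lemma SIG_R10: "i < n \<Longrightarrow> j < n \<Longrightarrow> adj n i j \<Longrightarrow> SIG (fprod [fF i, fF i, fF j] - fsc (vv + 1 / vv) (fprod [fF i, fF j, fF i])
        + fprod [fF j, fF i, fF i]) \<in> Id n r"
  using R9[of i n j r] by (simp add: algebra_simps)
lemma SIG_R11: "SIG (fprod (map fK [0..<n]) - fsc (vv ^ r) fone) \<in> Id n r"
proof -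
  have "cg n r (prod_list (rev (map fK [0..<n]))) (prod_list (map fK [0..<n]))"
    by (rule cg_prod_rev) auto
  then have "cg n r (SIG (fprod (map fK [0..<n]) - fsc (vv ^ r) fone)) (fprod (map fK [0..<n]) - fsc (vv ^ r) fone)"
    by (simp add: fprod_eq SIG_prod_list rev_map[symmetric] o_def cg_diff)
  then show ?thesis using R11 Id_cg by blast
qed
lemma SIG_R12: "i < n \<Longrightarrow> SIG (fprod (map (\<lambda>j. fK i - fsc (vv ^ j) fone) [0..<r + 1])) \<in> Id n r"
proof -
  assume a: "i < n"
  let ?xs = "map (\<lambda>j. fK i - fsc (vv ^ j) fone) [0..<r + 1]"
  have "cg n r (prod_list (rev ?xs)) (prod_list ?xs)"
    by (rule cg_prod_rev) (auto simp: a fsc_eq fone_eq)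
  then have "cg n r (SIG (fprod ?xs)) (fprod ?xs)"
    by (simp add: fprod_eq SIG_prod_list rev_map[symmetric] o_def)
  then show ?thesis using R12[OF a] Id_cg by blast
qed

lemma SIG_Rels: assumes "p \<in> Rels n r" shows "SIG p \<in> Id n r"
  using assms unfolding Rels_def
  apply (elim UnE CollectE exE conjE insertE emptyE)
  apply (simp_all only:)
  apply (rule SIG_R1; assumption)
  apply (rule SIG_R2; assumption)
  apply (rule SIG_R3; assumption)
  apply (rule SIG_R4; assumption)
  apply (rule SIG_R5; assumption)
  apply (rule SIG_R6; assumption)
  apply (rule SIG_R7; assumption)
  apply (rule SIG_R8; assumption)
  apply (rule SIG_R9; assumption)
  apply (rule SIG_R10; assumption)
  apply (rule SIG_R11)
  apply (rule SIG_R12; assumption)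
  done

lemma SIG_Id: assumes "p \<in> Id n r" shows "SIG p \<in> Id n r"
  using assms
proof induct
  case (rel p) then show ?case using SIG_Rels by blast
next
  case zero then show ?case by (simp add: Id.zero)
next
  case (add p q) then show ?case by (simp add: Id.add)
next
  case (smul p c) then show ?case by (simp add: Id.smul)
next
  case (mul p a b)
  have "SIG (fmul a (fmul p b)) = fmul (SIG b) (fmul (SIG p) (SIG a))"
    by (simp add: fmul_eq mult.assoc)
  then show ?case using mul by (simp add: Id.mul)
qed




fun gact :: "nat \<Rightarrow> gen \<Rightarrow> nat set \<Rightarrow> nat set \<times> qv" where
  "gact n (GE i) S = (if (i + 1) mod n \<in> S \<and> i \<notin> S then (insert i (S - {(i + 1) mod n}), 1) else (S, 0))"
| "gact n (GF i) S = (if i \<in> S \<and> (i + 1) mod n \<notin> S then (insert ((i + 1) mod n) (S - {i}), 1) else (S, 0))"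
| "gact n (GK i) S = (S, if i \<in> S then vv else 1)"
| "gact n (GKi i) S = (S, if i \<in> S then 1 / vv else 1)"

fun wact :: "nat \<Rightarrow> gen list \<Rightarrow> nat set \<Rightarrow> nat set \<times> qv" where
  "wact n [] S = (S, 1)"
| "wact n (g # w) S = (fst (gact n g (fst (wact n w S))), snd (gact n g (fst (wact n w S))) * snd (wact n w S))"

lemma wact_append: "wact n (u @ w) S = (fst (wact n u (fst (wact n w S))), snd (wact n u (fst (wact n w S))) * snd (wact n w S))"
  by (induct u) auto

definition Mc :: "nat \<Rightarrow> gen list \<Rightarrow> nat set \<Rightarrow> nat set \<Rightarrow> qv" where
  "Mc n x S T = (if fst (wact n x S) = T then snd (wact n x S) else 0)"

definition VV :: "nat \<Rightarrow> nat \<Rightarrow> nat set set" where "VV n r = {S. S \<subseteq> {..<n} \<and> card S = r}"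

definition Good :: "nat \<Rightarrow> nat \<Rightarrow> fa \<Rightarrow> bool" where
  "Good n r p \<longleftrightarrow> (\<forall>u w S T. fw n u \<longrightarrow> fw n w \<longrightarrow> S \<in> VV n r \<longrightarrow> Lg (\<lambda>x. Mc n (u @ x @ w) S T) p = 0)"

lemma Lg_cmult: "Lg (\<lambda>x. k * f x) p = k * Lg f p"
  by (simp add: Lg_def sum_distrib_left mult.left_commute)

lemma Lg_mult3: "Lg g (a * p * b) = (\<Sum>x\<in>ks a. \<Sum>y\<in>ks b. lk a x * lk b y * Lg (\<lambda>z. g (x @ z @ y)) p)"
proof -
  have "a * p * b = (\<Sum>x\<in>ks a. sg x (lk a x)) * p * (\<Sum>y\<in>ks b. sg y (lk b y))"
    by (simp only: fa_expand)
  also have "\<dots> = (\<Sum>x\<in>ks a. \<Sum>y\<in>ks b. sg x (lk a x) * p * sg y (lk b y))"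
    by (simp add: sum_distrib_left sum_distrib_right sum.swap[of _ "ks b"])
  finally have e: "a * p * b = (\<Sum>x\<in>ks a. \<Sum>y\<in>ks b. sg x (lk a x) * p * sg y (lk b y))" .
  show ?thesis unfolding e Lg_sum
    by (intro sum.cong refl) (simp add: mult.assoc Lg_mult_left Lg_mult_right)
qed

lemma Good_mult: assumes "Good n r p" "a \<in> FA n" "b \<in> FA n" shows "Good n r (a * p * b)"
  unfolding Good_def
proof (intro allI impI)
  fix u w S T assume h: "fw n u" "fw n w" "S \<in> VV n r"
  have "Lg (\<lambda>x. Mc n (u @ x @ w) S T) (a * p * b) =
    (\<Sum>x\<in>ks a. \<Sum>y\<in>ks b. lk a x * lk b y * Lg (\<lambda>z. Mc n ((u @ x) @ z @ (y @ w)) S T) p)"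
    unfolding Lg_mult3 by simp
  also have "\<dots> = 0"
  proof (intro sum.neutral ballI)
    fix x y assume "x \<in> ks a" "y \<in> ks b"
    then have "fw n (u @ x)" "fw n (y @ w)" using assms h by (auto simp: FA_iff)
    then have "Lg (\<lambda>z. Mc n ((u @ x) @ z @ (y @ w)) S T) p = 0"
      using assms(1) h unfolding Good_def by blast
    then show "lk a x * lk b y * Lg (\<lambda>z. Mc n ((u @ x) @ z @ (y @ w)) S T) p = 0"
      by simp
  qed
  finally show "Lg (\<lambda>x. Mc n (u @ x @ w) S T) (a * p * b) = 0" .
qed

lemma Good_add: "Good n r p \<Longrightarrow> Good n r q \<Longrightarrow> Good n r (p + q)"
  by (simp add: Good_def)
lemma Good_zero: "Good n r 0"
  by (simp add: Good_def)

lemma Mc_split: "Mc n (u @ x @ w) S T = snd (wact n w S) * snd (wact n x (fst (wact n w S))) * Mc n u (fst (wact n x (fst (wact n w S)))) T"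
  by (simp add: Mc_def wact_append)

definition Ev :: "nat \<Rightarrow> nat set \<Rightarrow> (nat set \<Rightarrow> qv) \<Rightarrow> fa \<Rightarrow> qv" where
  "Ev n R h p = Lg (\<lambda>x. snd (wact n x R) * h (fst (wact n x R))) p"

lemma suc_mod_ne: "2 \<le> n \<Longrightarrow> (i::nat) < n \<Longrightarrow> Suc i mod n \<noteq> i"
  by (cases "Suc i = n") auto

lemma gact_V: assumes "2 \<le> n" "gidx g < n" "S \<in> VV n r" shows "fst (gact n g S) \<in> VV n r"
proof (cases g)
  case (GE i)
  have ne: "(i + 1) mod n \<noteq> i" using assms GE suc_mod_ne by simp
  have fin: "finite S" using assms(3) by (auto simp: VV_def intro: finite_subset)
  have c: "x \<in> S \<Longrightarrow> Suc (card S - Suc 0) = card S" for x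
    using fin card_gt_0_iff[of S] by auto
  show ?thesis using assms GE ne fin c by (auto simp: VV_def card_insert_if)
next
  case (GF i)
  have ne: "(i + 1) mod n \<noteq> i" using assms GF suc_mod_ne by simp
  have fin: "finite S" using assms(3) by (auto simp: VV_def intro: finite_subset)
  have c: "x \<in> S \<Longrightarrow> Suc (card S - Suc 0) = card S" for x
    using fin card_gt_0_iff[of S] by auto
  show ?thesis using assms GF ne fin c by (auto simp: VV_def card_insert_if)
qed (use assms in auto)

lemma wact_V: "2 \<le> n \<Longrightarrow> fw n w \<Longrightarrow> S \<in> VV n r \<Longrightarrow> fst (wact n w S) \<in> VV n r"
  by (induct w) (auto intro: gact_V)

lemma Good_from_Ev: assumes "2 \<le> n" "\<And>R h. R \<in> VV n r \<Longrightarrow> Ev n R h p = 0" shows "Good n r p"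
  unfolding Good_def
proof (intro allI impI)
  fix u w S T assume h: "fw n u" "fw n w" "S \<in> VV n r"
  let ?R = "fst (wact n w S)"
  have "Lg (\<lambda>x. Mc n (u @ x @ w) S T) p = snd (wact n w S) * Ev n ?R (\<lambda>R'. Mc n u R' T) p"
    unfolding Mc_split Ev_def by (simp add: Lg_cmult[symmetric] mult.assoc)
  also have "\<dots> = 0" using assms(2)[OF wact_V[OF assms(1) h(2,3)]] by simp
  finally show "Lg (\<lambda>x. Mc n (u @ x @ w) S T) p = 0" .
qed


lemmas evsimps = Ev_def fmul_eq fsc_eq fone_eq fprod_eq fgen_def sg_mult one_fa

lemma coefE: assumes "2 \<le> n" "i < n" "j < n" "Suc j mod n \<in> R" "j \<notin> R"
  shows "(if i \<in> insert j (R - {Suc j mod n}) then vv else 1) = vv powi epsp n i j * (if i \<in> R then vv else 1)"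
proof -
  have ne: "Suc j mod n \<noteq> j" using suc_mod_ne assms by blast
  consider "i = j" | "i \<noteq> j" "i = Suc j mod n" | "i \<noteq> j" "i \<noteq> Suc j mod n" by blast
  then show ?thesis
  proof cases
    case 1 then show ?thesis using assms by (simp add: epsp_alt)
  next
    case 2 then show ?thesis using assms vv_ne0 by (simp add: epsp_alt power_int_minus)
  next
    case 3 then show ?thesis using assms by (simp add: epsp_alt)
  qed
qed

lemma coefF: assumes "2 \<le> n" "i < n" "j < n" "j \<in> R" "Suc j mod n \<notin> R"
  shows "(if i \<in> insert (Suc j mod n) (R - {j}) then vv else 1) = vv powi (- epsp n i j) * (if i \<in> R then vv else 1)"
proof -
  have ne: "Suc j mod n \<noteq> j" using suc_mod_ne assms by blast
  consider "i = j" | "i \<noteq> j" "i = Suc j mod n" | "i \<noteq> j" "i \<noteq> Suc j mod n" by blast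
  then show ?thesis
  proof cases
    case 1 then show ?thesis using assms ne vv_ne0 by (simp add: epsp_alt power_int_minus)
  next
    case 2 then show ?thesis using assms ne by (simp add: epsp_alt)
  next
    case 3 then show ?thesis using assms by (simp add: epsp_alt)
  qed
qed

lemma Ev_R1: "Ev n R h (fmul (fK i) (fK j) - fmul (fK j) (fK i)) = 0"
  by (simp add: evsimps)
lemma Ev_R2: "Ev n R h (fmul (fK i) (fKi i) - fone) = 0"
  using vv_ne0 by (simp add: evsimps)
lemma Ev_R3: "Ev n R h (fmul (fKi i) (fK i) - fone) = 0"
  using vv_ne0 by (simp add: evsimps)
lemma Ev_R4: "2 \<le> n \<Longrightarrow> i < n \<Longrightarrow> j < n \<Longrightarrow> Ev n R h (fmul (fK i) (fE j) - fsc (vv powi epsp n i j) (fmul (fE j) (fK i))) = 0"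
  using coefE[of n i j R] by (cases "Suc j mod n \<in> R \<and> j \<notin> R") (auto simp: evsimps)
lemma Ev_R5: "2 \<le> n \<Longrightarrow> i < n \<Longrightarrow> j < n \<Longrightarrow> Ev n R h (fmul (fK i) (fF j) - fsc (vv powi (- epsp n i j)) (fmul (fF j) (fK i))) = 0"
  using coefF[of n i j R] by (cases "j \<in> R \<and> Suc j mod n \<notin> R") (auto simp: evsimps)


lemma set_back1: "i \<in> R \<Longrightarrow> k \<notin> R \<Longrightarrow> i \<noteq> k \<Longrightarrow> insert i (insert k (R - {i}) - {k}) = R"
  by auto

lemma Ev_R6_eq: assumes "2 \<le> n" "i < n"
  shows "Ev n R h (fmul (fE i) (fF i) - fmul (fF i) (fE i) - fsc (1 / (vv - 1 / vv))
              (fmul (fK i) (fKi ((i + 1) mod n)) - fmul (fKi i) (fK ((i + 1) mod n)))) = 0"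
proof -
  have ne: "Suc i mod n \<noteq> i" using suc_mod_ne assms by blast
  have ne': "i \<noteq> Suc i mod n" using ne by simp
  have d: "vv - 1 / vv \<noteq> 0" by (rule vv_diff_ne0)
  have v: "vv \<noteq> 0" by (rule vv_ne0)
  have d2: "vv \<noteq> 1 / vv" using vv_sq_ne1 v by (auto simp: field_simps)
  consider "i \<in> R" "Suc i mod n \<in> R" | "i \<in> R" "Suc i mod n \<notin> R"
    | "i \<notin> R" "Suc i mod n \<in> R" | "i \<notin> R" "Suc i mod n \<notin> R" by blast
  then show ?thesis
  proof cases
    case 1 then show ?thesis using ne ne' v by (simp add: evsimps)
  next
    case 2
    then show ?thesis using ne ne' v d2 d
      by (simp add: evsimps insert_absorb) (simp add: field_simps)
  next
    case 3
    then show ?thesis using ne ne' v d2 d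
      by (simp add: evsimps insert_absorb) (simp add: field_simps)
  next
    case 4 then show ?thesis using ne ne' v by (simp add: evsimps)
  qed
qed


lemma adj_alt: "adj n i j \<longleftrightarrow> j = Suc i mod n \<or> i = Suc j mod n"
  by (simp add: adj_def)

lemma comm_EF: assumes "i \<noteq> j" "j \<noteq> Suc i mod n" "i \<noteq> Suc j mod n" "Suc i mod n \<noteq> Suc j mod n"
  shows "wact n [GE i, GF j] R = wact n [GF j, GE i] R"
  using assms by (auto simp: insert_commute)

lemma comm_EE: assumes "i \<noteq> j" "j \<noteq> Suc i mod n" "i \<noteq> Suc j mod n" "Suc i mod n \<noteq> Suc j mod n"
  shows "wact n [GE i, GE j] R = wact n [GE j, GE i] R"
  using assms by (auto simp: insert_commute)

lemma comm_FF: assumes "i \<noteq> j" "j \<noteq> Suc i mod n" "i \<noteq> Suc j mod n" "Suc i mod n \<noteq> Suc j mod n"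
  shows "wact n [GF i, GF j] R = wact n [GF j, GF i] R"
  using assms by (auto simp: insert_commute)

lemma zero_EF: assumes "j = Suc i mod n \<or> i = Suc j mod n" "2 \<le> n" "i < n" "j < n"
  shows "snd (wact n [GE i, GF j] R) = 0 \<and> snd (wact n [GF j, GE i] R) = 0"
proof -
  have a: "Suc i mod n \<noteq> i" "Suc j mod n \<noteq> j" using suc_mod_ne assms by blast+
  from assms(1) show ?thesis
  proof
    assume j: "j = Suc i mod n"
    have b: "Suc (Suc i mod n) mod n \<noteq> Suc i mod n" using suc_mod_ne assms by simp
    show ?thesis using a b unfolding j by simp
  next
    assume i: "i = Suc j mod n"
    show ?thesis using a unfolding i by simp
  qed
qed


lemma suc2_mod_ne: assumes "3 \<le> n" "(i::nat) < n" shows "Suc (Suc i mod n) mod n \<noteq> i"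
proof -
  have k: "Suc i mod n < n" using assms by simp
  show ?thesis using mod_suc_if[of i n] mod_suc_if[OF k] assms by (auto split: if_splits)
qed

lemma EE0: "2 \<le> n \<Longrightarrow> i < n \<Longrightarrow> snd (wact n [GE i, GE i] S) = 0"
  using suc_mod_ne[of n i] by auto
lemma FF0: "2 \<le> n \<Longrightarrow> i < n \<Longrightarrow> snd (wact n [GF i, GF i] S) = 0"
  using suc_mod_ne[of n i] by auto

lemma EEE0: assumes "3 \<le> n" "i < n" "j < n" "adj n i j" shows "snd (wact n [GE i, GE j, GE i] S) = 0"
proof -
  have a: "Suc i mod n \<noteq> i" "Suc j mod n \<noteq> j" using suc_mod_ne assms by auto
  from assms(4) show ?thesis unfolding adj_alt
  proof
    assume j: "j = Suc i mod n"
    have b: "Suc (Suc i mod n) mod n \<noteq> i" using suc2_mod_ne assms by blast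
    have c: "Suc (Suc i mod n) mod n \<noteq> Suc i mod n" using suc_mod_ne assms by simp
    show ?thesis using a b c unfolding j by auto
  next
    assume i: "i = Suc j mod n"
    have b: "Suc (Suc j mod n) mod n \<noteq> j" using suc2_mod_ne assms by blast
    show ?thesis using a b unfolding i by auto
  qed
qed

lemma FFF0: assumes "3 \<le> n" "i < n" "j < n" "adj n i j" shows "snd (wact n [GF i, GF j, GF i] S) = 0"
proof -
  have a: "Suc i mod n \<noteq> i" "Suc j mod n \<noteq> j" using suc_mod_ne assms by auto
  from assms(4) show ?thesis unfolding adj_alt
  proof
    assume j: "j = Suc i mod n"
    have b: "Suc (Suc i mod n) mod n \<noteq> i" using suc2_mod_ne assms by blast
    have c: "Suc (Suc i mod n) mod n \<noteq> Suc i mod n" using suc_mod_ne assms by simp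
    show ?thesis using a b c unfolding j by auto
  next
    assume i: "i = Suc j mod n"
    have b: "Suc (Suc j mod n) mod n \<noteq> j" using suc2_mod_ne assms by blast
    show ?thesis using a b unfolding i by auto
  qed
qed


lemma w3_left: "(\<And>S'. snd (wact n [a, b] S') = 0) \<Longrightarrow> snd (wact n [a, b, c] S) = 0"
proof -
  assume h: "\<And>S'. snd (wact n [a, b] S') = 0"
  have "snd (wact n ([a, b] @ [c]) S) = snd (wact n [a, b] (fst (wact n [c] S))) * snd (wact n [c] S)"
    by (simp only: wact_append snd_conv)
  then show ?thesis using h[of "fst (wact n [c] S)"] by auto
qed
lemma w3_right: "snd (wact n [b, c] S) = 0 \<Longrightarrow> snd (wact n [a, b, c] S) = 0"
  using wact_append[of n "[a]" "[b, c]" S] by simp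

lemma Ev_R9: assumes "3 \<le> n" "i < n" "j < n" "adj n i j"
  shows "Ev n R h (fprod [fE i, fE i, fE j] - fsc (vv + 1 / vv) (fprod [fE i, fE j, fE i]) + fprod [fE j, fE i, fE i]) = 0"
proof -
  have z1: "snd (wact n [GE i, GE i, GE j] R) = 0" by (rule w3_left) (rule EE0, use assms in auto)
  have z2: "snd (wact n [GE i, GE j, GE i] R) = 0" by (rule EEE0) (use assms in auto)
  have z3: "snd (wact n [GE j, GE i, GE i] R) = 0" by (rule w3_right) (rule EE0, use assms in auto)
  show ?thesis using z1 z2 z3 by (simp add: evsimps del: wact.simps)
qed

lemma Ev_R10: assumes "3 \<le> n" "i < n" "j < n" "adj n i j"
  shows "Ev n R h (fprod [fF i, fF i, fF j] - fsc (vv + 1 / vv) (fprod [fF i, fF j, fF i]) + fprod [fF j, fF i, fF i]) = 0"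
proof -
  have z1: "snd (wact n [GF i, GF i, GF j] R) = 0" by (rule w3_left) (rule FF0, use assms in auto)
  have z2: "snd (wact n [GF i, GF j, GF i] R) = 0" by (rule FFF0) (use assms in auto)
  have z3: "snd (wact n [GF j, GF i, GF i] R) = 0" by (rule w3_right) (rule FF0, use assms in auto)
  show ?thesis using z1 z2 z3 by (simp add: evsimps del: wact.simps)
qed

lemma Ev_R6_ne: assumes "2 \<le> n" "i < n" "j < n" "i \<noteq> j"
  shows "Ev n R h (fmul (fE i) (fF j) - fmul (fF j) (fE i)) = 0"
proof (cases "j = Suc i mod n \<or> i = Suc j mod n")
  case True
  then show ?thesis using zero_EF[OF True assms(1-3), of R] by (simp add: evsimps del: wact.simps)
next
  case False
  have "Suc i mod n \<noteq> Suc j mod n" using assms by simp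
  then have "wact n [GE i, GF j] R = wact n [GF j, GE i] R" using False assms by (intro comm_EF) auto
  then show ?thesis by (simp add: evsimps del: wact.simps)
qed

lemma Ev_R6: assumes "2 \<le> n" "i < n" "j < n"
  shows "Ev n R h (fmul (fE i) (fF j) - fmul (fF j) (fE i)
        - (if i = j then fsc (1 / (vv - 1 / vv))
              (fmul (fK i) (fKi ((i + 1) mod n)) - fmul (fKi i) (fK ((i + 1) mod n)))
           else 0)) = 0"
  using Ev_R6_eq[OF assms(1,2), of R h] Ev_R6_ne[OF assms, of R h] by (cases "i = j") simp_all

lemma Ev_R7: assumes "2 \<le> n" "i < n" "j < n" "\<not> adj n i j"
  shows "Ev n R h (fmul (fE i) (fE j) - fmul (fE j) (fE i)) = 0"
proof (cases "i = j")
  case False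
  have "Suc i mod n \<noteq> Suc j mod n" using assms False by simp
  then have "wact n [GE i, GE j] R = wact n [GE j, GE i] R" using False assms by (intro comm_EE) (auto simp: adj_alt)
  then show ?thesis by (simp add: evsimps del: wact.simps)
qed (simp add: Ev_def)

lemma Ev_R8: assumes "2 \<le> n" "i < n" "j < n" "\<not> adj n i j"
  shows "Ev n R h (fmul (fF i) (fF j) - fmul (fF j) (fF i)) = 0"
proof (cases "i = j")
  case False
  have "Suc i mod n \<noteq> Suc j mod n" using assms False by simp
  then have "wact n [GF i, GF j] R = wact n [GF j, GF i] R" using False assms by (intro comm_FF) (auto simp: adj_alt)
  then show ?thesis by (simp add: evsimps del: wact.simps)
qed (simp add: Ev_def)


definition chi :: "nat \<Rightarrow> nat set \<Rightarrow> gen list \<Rightarrow> qv" where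
  "chi n R x = prod_list (map (\<lambda>g. snd (gact n g R)) x)"

lemma chi_append: "chi n R (x @ y) = chi n R x * chi n R y"
  by (simp add: chi_def)
lemma chi_Nil[simp]: "chi n R [] = 1" by (simp add: chi_def)

lemma wact_Kw: "Kw n x \<Longrightarrow> wact n x R = (R, chi n R x)"
  by (induct x) (auto simp: Kl_def chi_def)

lemma Lg_hom: assumes "\<And>x y. f (x @ y) = f x * f y"
  shows "Lg f (p * q) = Lg f p * Lg f q"
proof (induct p rule: fa_induct)
  case (single k c)
  have "Lg f (sg k c * q) = c * Lg (\<lambda>y. f k * f y) q" by (simp add: Lg_mult_left assms)
  also have "\<dots> = c * f k * Lg f q" by (simp add: Lg_cmult)
  finally show ?case by simp
qed (auto simp: distrib_right)

lemma Lg_chi_mult: "Lg (chi n R) (p * q) = Lg (chi n R) p * Lg (chi n R) q"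
  by (rule Lg_hom) (rule chi_append)

lemma Lg_chi_prod: "Lg (chi n R) (prod_list xs) = prod_list (map (Lg (chi n R)) xs)"
  by (induct xs) (auto simp: Lg_chi_mult one_fa)

lemma Ev_Kp: "Kp n p \<Longrightarrow> Ev n R h p = h R * Lg (chi n R) p"
proof -
  assume "Kp n p"
  then have "Ev n R h p = Lg (\<lambda>x. h R * chi n R x) p"
    unfolding Ev_def by (intro Lg_cong) (auto simp: Kp_def wact_Kw mult.commute)
  then show ?thesis by (simp add: Lg_cmult)
qed

lemma Ev_R11: assumes "R \<in> VV n r" shows "Ev n R h (fprod (map fK [0..<n]) - fsc (vv ^ r) fone) = 0"
proof -
  have kp: "Kp n (fprod (map fK [0..<n]) - fsc (vv ^ r) fone)"
    by (auto simp: fprod_eq fsc_eq fone_eq intro!: Kp_prod_list Kp_diff)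
  have "Lg (chi n R) (fprod (map fK [0..<n])) = prod_list (map (\<lambda>i. if i \<in> R then vv else 1) [0..<n])"
    by (simp add: fprod_eq Lg_chi_prod o_def fgen_def chi_def)
  also have "\<dots> = (\<Prod>i\<in>{0..<n}. if i \<in> R then vv else 1)"
    using prod.distinct_set_conv_list[of "[0..<n]" "\<lambda>i. if i \<in> R then vv else 1"] by simp
  also have "\<dots> = vv ^ card ({0..<n} \<inter> R)"
    by (simp add: prod.If_cases)
  also have "{0..<n} \<inter> R = R" using assms by (auto simp: VV_def)
  also have "card R = r" using assms by (simp add: VV_def)
  finally have "Lg (chi n R) (fprod (map fK [0..<n])) = vv ^ r" .
  then have "Lg (chi n R) (fprod (map fK [0..<n]) - fsc (vv ^ r) fone) = 0"
    by (simp add: fsc_eq fone_eq one_fa)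
  then show ?thesis using Ev_Kp[OF kp] by simp
qed

lemma Ev_R12: assumes "1 \<le> r" "i < n" shows "Ev n R h (fprod (map (\<lambda>j. fK i - fsc (vv ^ j) fone) [0..<r + 1])) = 0"
proof -
  have kp: "Kp n (fprod (map (\<lambda>j. fK i - fsc (vv ^ j) fone) [0..<r + 1]))"
    using assms by (simp only: fprod_eq, intro Kp_prod_list) (auto simp: fsc_eq fone_eq)
  have "Lg (chi n R) (fprod (map (\<lambda>j. fK i - fsc (vv ^ j) fone) [0..<r + 1]))
     = prod_list (map (Lg (chi n R) \<circ> (\<lambda>j. fK i - fsc (vv ^ j) fone)) [0..<r + 1])"
    by (simp only: fprod_eq Lg_chi_prod map_map)
  also have "\<dots> = prod_list (map (\<lambda>j. (if i \<in> R then vv else 1) - vv ^ j) [0..<r + 1])"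
    by (intro arg_cong[where f=prod_list] map_cong refl) (simp add: fgen_def chi_def fsc_eq fone_eq one_fa)
  also have "\<dots> = 0"
  proof -
    let ?F = "\<lambda>j. (if i \<in> R then vv else 1) - vv ^ j"
    have "?F (if i \<in> R then 1 else 0) = 0" by simp
    moreover have "(if i \<in> R then 1 else 0) \<in> set [0..<r + 1]" using assms by auto
    ultimately have "0 \<in> ?F ` set [0..<r + 1]" by (intro rev_image_eqI) simp_all
    then have "0 \<in> set (map ?F [0..<r + 1])" by (simp only: set_map)
    then show ?thesis by (simp only: prod_list_zero_iff)
  qed
  finally show ?thesis using Ev_Kp[OF kp] by simp
qed


lemma Good_Rels: assumes "3 \<le> n" "1 \<le> r" "p \<in> Rels n r" shows "Good n r p"
proof (rule Good_from_Ev)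
  show "2 \<le> n" using assms by simp
  fix R h assume R: "R \<in> VV n r"
  have n2: "2 \<le> n" using assms by simp
  from assms(3) show "Ev n R h p = 0" unfolding Rels_def
  apply (elim UnE CollectE exE conjE insertE emptyE)
  apply (simp_all only:)
  apply (rule Ev_R1)
  apply (rule Ev_R2)
  apply (rule Ev_R3)
  apply (rule Ev_R4[OF n2]; assumption)
  apply (rule Ev_R5[OF n2]; assumption)
  apply (rule Ev_R6[OF n2]; assumption)
  apply (rule Ev_R7[OF n2]; assumption)
  apply (rule Ev_R8[OF n2]; assumption)
  apply (rule Ev_R9[OF assms(1)]; assumption)
  apply (rule Ev_R10[OF assms(1)]; assumption)
  apply (rule Ev_R11[OF R])
  apply (rule Ev_R12[OF assms(2)]; assumption)
  done
qed

lemma Good_Id: assumes "3 \<le> n" "1 \<le> r" "p \<in> Id n r" shows "Good n r p"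
  using assms(3)
proof induct
  case (rel p) then show ?case using Good_Rels assms by blast
next
  case zero then show ?case by (rule Good_zero)
next
  case (add p q) then show ?case by (simp add: Good_add)
next
  case (smul p c)
  have "fsc c p = C c * p * 1" by (simp add: fsc_eq)
  then show ?case using Good_mult[OF smul(2), of "C c" 1] by simp
next
  case (mul p a b)
  then show ?case using Good_mult[OF mul(2,3,4)] by (simp add: fmul_eq mult.assoc)
qed

lemma K_distinct: assumes "3 \<le> n" "1 \<le> r" "r < n" "0 < m" "m < n"
  shows "fK 0 - fK m \<notin> Id n r"
proof
  assume "fK 0 - fK m \<in> Id n r"
  then have G: "Good n r (fK 0 - fK m)" using Good_Id assms by blast
  have "r - 1 \<le> card ({..<n} - {0, m})" using assms by (simp add: card_Diff_subset)
  then obtain A where A: "A \<subseteq> {..<n} - {0, m}" "card A = r - 1" and finA: "finite A"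
    by (rule obtain_subset_with_card_n)
  let ?S = "insert 0 A"
  have "0 \<notin> A" using A by auto
  then have S: "?S \<in> VV n r" using A finA assms by (auto simp: VV_def)
  have "0 \<in> ?S" "m \<notin> ?S" using A assms by auto
  then have "Lg (\<lambda>x. Mc n ([] @ x @ []) ?S ?S) (fK 0 - fK m) = vv - 1"
    by (simp add: fgen_def Mc_def)
  moreover have "Lg (\<lambda>x. Mc n ([] @ x @ []) ?S ?S) (fK 0 - fK m) = 0"
    using G S fw_simps(1)[of n] unfolding Good_def by blast
  ultimately show False using vv_ne1 by simp
qed




definition nuT :: "nat \<Rightarrow> nat \<Rightarrow> fa set \<Rightarrow> fa set" where "nuT n r A = cls n r (NU n (rep A))"
definition sigT :: "nat \<Rightarrow> nat \<Rightarrow> fa set \<Rightarrow> fa set" where "sigT n r A = cls n r (SIG (rep A))"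

lemma NU_cg: "0 < n \<Longrightarrow> cg n r p q \<Longrightarrow> cg n r (NU n p) (NU n q)"
  unfolding cg_def using NU_Id[of n "p - q" r] by simp
lemma SIG_cg: "cg n r p q \<Longrightarrow> cg n r (SIG p) (SIG q)"
  unfolding cg_def using SIG_Id[of "p - q" n r] by simp

lemma nuT_cls: "0 < n \<Longrightarrow> p \<in> FA n \<Longrightarrow> nuT n r (cls n r p) = cls n r (NU n p)"
  unfolding nuT_def using rep_cls[of p n r] by (intro cls_eqI NU_cg) auto
lemma sigT_cls: "p \<in> FA n \<Longrightarrow> sigT n r (cls n r p) = cls n r (SIG p)"
  unfolding sigT_def using rep_cls[of p n r] by (intro cls_eqI SIG_cg) auto

lemma FA_induct[consumes 1, case_names zero single add]:
  assumes "p \<in> FA n" "P 0" "\<And>k c. fw n k \<Longrightarrow> P (sg k c)"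
    "\<And>p q. p \<in> FA n \<Longrightarrow> q \<in> FA n \<Longrightarrow> P p \<Longrightarrow> P q \<Longrightarrow> P (p + q)"
  shows "P p"
proof -
  have kw: "fw n k" if "k \<in> ks p" for k using assms(1) that by (simp add: FA_iff)
  have "P (\<Sum>k\<in>K. sg k (lk p k))" if "K \<subseteq> ks p" for K
  proof -
    have "finite K" using that by (rule finite_subset) simp
    then show ?thesis using that
    proof induct
      case empty then show ?case using assms(2) by simp
    next
      case (insert x F)
      have 1: "P (sg x (lk p x))" using insert kw assms(3) by auto
      have 2: "P (\<Sum>k\<in>F. sg k (lk p k))" using insert by auto
      have 3: "sg x (lk p x) \<in> FA n" using insert kw by auto
      have 4: "(\<Sum>k\<in>F. sg k (lk p k)) \<in> FA n" using insert kw by (auto intro!: FA_sum)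
      show ?case using insert(1,2) assms(4)[OF 3 4 1 2] by (simp add: sum.insert)
    qed
  qed
  from this[of "ks p"] show ?thesis by (simp add: fa_expand)
qed

lemma cls_word: "fw n k \<Longrightarrow> cls n r (sg k 1) \<in> Tcar n r" by simp

lemma T_unique:
  assumes l1: "T_lin n r f1" and l2: "T_lin n r f2"
    and m1: "\<forall>A\<in>Tcar n r. \<forall>B\<in>Tcar n r. f1 (Tmul n r A B) = M (f1 A) (f1 B)"
    and m2: "\<forall>A\<in>Tcar n r. \<forall>B\<in>Tcar n r. f2 (Tmul n r A B) = M (f2 A) (f2 B)"
    and g: "\<And>g. gidx g < n \<Longrightarrow> f1 (Tgen n r g) = f2 (Tgen n r g)"
  shows "\<forall>x\<in>Tcar n r. f1 x = f2 x"
proof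
  fix x assume "x \<in> Tcar n r"
  then obtain p where p: "p \<in> FA n" "x = cls n r p" by (auto simp: Tcar_iff)
  have w: "f1 (cls n r (sg k 1)) = f2 (cls n r (sg k 1))" if "fw n k" for k
    using that
  proof (induct k)
    case Nil then show ?case using l1 l2 by (simp add: T_lin_def Tone_cls one_fa)
  next
    case (Cons a k)
    have e: "cls n r (sg (a # k) 1) = Tmul n r (Tgen n r a) (cls n r (sg k 1))"
      using Cons by (simp add: Tgen_cls Tmul_cls sg_mult)
    have "Tgen n r a \<in> Tcar n r" using Cons by (simp add: Tgen_cls)
    then show ?case unfolding e using m1 m2 Cons g by simp
  qed
  have "f1 (cls n r p) = f2 (cls n r p)"
    using p(1)
  proof (induct p rule: FA_induct)
    case zero
    have "cls n r 0 = Tsmul n r 0 (Tone n r)" by (simp add: Tsmul_cls Tone_cls)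
    then show ?case using l1 l2 by (simp add: T_lin_def Tone_cls)
  next
    case (single k c)
    have "cls n r (sg k c) = Tsmul n r c (cls n r (sg k 1))" using single by (simp add: Tsmul_cls sg_mult)
    then show ?case using l1 l2 w[OF single] single by (simp add: T_lin_def)
  next
    case (add p q)
    have "cls n r (p + q) = Tadd n r (cls n r p) (cls n r q)" using add by (simp add: Tadd_cls)
    then show ?case using l1 l2 add by (simp add: T_lin_def)
  qed
  then show "f1 x = f2 x" using p by simp
qed


fun setidx :: "gen \<Rightarrow> nat \<Rightarrow> gen" where
  "setidx (GE _) k = GE k" | "setidx (GF _) k = GF k" | "setidx (GK _) k = GK k" | "setidx (GKi _) k = GKi k"

lemma shg_eq: "shg n g = setidx g ((gidx g + 1) mod n)" by (cases g) auto
lemma gidx_setidx[simp]: "gidx (setidx g k) = k" by (cases g) auto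
lemma setidx_setidx[simp]: "setidx (setidx g k) k' = setidx g k'" by (cases g) auto
lemma setidx_gidx[simp]: "setidx g (gidx g) = g" by (cases g) auto

lemma shg_pow: "gidx g < n \<Longrightarrow> (shg n ^^ k) g = setidx g ((gidx g + k) mod n)"
proof (induct k)
  case (Suc k)
  then show ?case by (simp add: shg_eq mod_Suc_eq)
qed simp

lemma NU_pow: "(NU n ^^ k) p = subst (map (shg n ^^ k)) p"
proof (induct k arbitrary: p)
  case 0
  have "subst (\<lambda>a. a) p = p" by (rule subst_id_on) simp
  then show ?case by (simp add: id_def)
next
  case (Suc k)
  have "(NU n ^^ Suc k) p = NU n ((NU n ^^ k) p)" by simp
  also have "\<dots> = subst (fnu n \<circ> map (shg n ^^ k)) p" by (simp add: Suc subst_comp)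
  also have "fnu n \<circ> map (shg n ^^ k) = map (shg n ^^ Suc k)" by (rule ext) (simp add: fnu_def)
  finally show ?case .
qed

lemma NU_pow_FA: "0 < n \<Longrightarrow> p \<in> FA n \<Longrightarrow> (NU n ^^ k) p \<in> FA n"
  by (induct k) auto

lemma nuT_pow: "0 < n \<Longrightarrow> p \<in> FA n \<Longrightarrow> (nuT n r ^^ k) (cls n r p) = cls n r ((NU n ^^ k) p)"
  by (induct k) (auto simp: nuT_cls NU_pow_FA)

lemma NU_pow_n: "p \<in> FA n \<Longrightarrow> (NU n ^^ n) p = p"
proof -
  assume p: "p \<in> FA n"
  have "subst (map (shg n ^^ n)) p = p"
  proof (rule subst_id_on)
    fix x assume "x \<in> ks p"
    then have "fw n x" using p by (simp add: FA_iff)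
    then show "map (shg n ^^ n) x = x" by (induct x) (auto simp: shg_pow)
  qed
  then show ?thesis by (simp add: NU_pow)
qed

lemma nuT_Tcar: "0 < n \<Longrightarrow> x \<in> Tcar n r \<Longrightarrow> nuT n r x \<in> Tcar n r"
  by (auto simp: Tcar_iff nuT_cls)

lemma nuT_n: "0 < n \<Longrightarrow> x \<in> Tcar n r \<Longrightarrow> (nuT n r ^^ n) x = x"
  by (auto simp: Tcar_iff nuT_pow NU_pow_n)

lemma nuT_pow_Tcar: "0 < n \<Longrightarrow> x \<in> Tcar n r \<Longrightarrow> (nuT n r ^^ k) x \<in> Tcar n r"
  by (induct k) (auto simp: nuT_Tcar)

lemma nuT_bij: assumes "0 < n" shows "bij_betw (nuT n r) (Tcar n r) (Tcar n r)"
proof -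
  obtain k where k: "n = Suc k" using assms by (cases n) auto
  have bk: "(nuT n r ^^ k) (nuT n r x) = x" if "x \<in> Tcar n r" for x
    using nuT_n[OF assms that] unfolding k by (simp add: funpow_Suc_right del: funpow.simps)
  show ?thesis unfolding bij_betw_def
  proof
    show "inj_on (nuT n r) (Tcar n r)" by (metis bk inj_onI)
    show "nuT n r ` Tcar n r = Tcar n r"
    proof
      show "nuT n r ` Tcar n r \<subseteq> Tcar n r" using nuT_Tcar assms by blast
      show "Tcar n r \<subseteq> nuT n r ` Tcar n r"
      proof
        fix x assume x: "x \<in> Tcar n r"
        have "nuT n r ((nuT n r ^^ k) x) = x" using nuT_n[OF assms x] unfolding k by simp
        moreover have "(nuT n r ^^ k) x \<in> Tcar n r" using nuT_pow_Tcar[OF assms x] .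
        ultimately show "x \<in> nuT n r ` Tcar n r" by (metis image_eqI)
      qed
    qed
  qed
qed

lemma nuT_aut: assumes "0 < n" shows "T_aut n r (nuT n r)"
  unfolding T_aut_def T_lin_def
  using nuT_bij[OF assms]
  by (auto simp: Tcar_iff nuT_cls assms Tadd_cls Tsmul_cls Tmul_cls Tone_cls)

lemma nuT_gens: assumes "0 < n" shows "nu_gens n r (nuT n r)"
  unfolding nu_gens_def using assms by (auto simp: Tgen_cls nuT_cls fnu_def)

lemma nuT_order: assumes "3 \<le> n" "1 \<le> r" "r < n" "0 < m" "m < n"
  shows "(nuT n r ^^ m) (Tgen n r (GK 0)) \<noteq> Tgen n r (GK 0)"
proof
  have n: "0 < n" using assms by simp
  assume "(nuT n r ^^ m) (Tgen n r (GK 0)) = Tgen n r (GK 0)"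
  moreover have "(nuT n r ^^ m) (Tgen n r (GK 0)) = cls n r (fK m)"
    using n assms by (simp add: Tgen_cls nuT_pow NU_pow shg_pow fgen_def)
  ultimately have "cls n r (fK m) = cls n r (fK 0)" by (simp add: Tgen_cls fgen_def)
  then have "cg n r (fK 0) (fK m)" using assms by (subst (asm) cls_eq_iff) (auto intro: cg_sym)
  then show False using K_distinct[OF assms] by (simp add: cg_def)
qed


lemma SIG_SIG: "SIG (SIG p) = p"
proof -
  have "SIG (SIG p) = subst (fsig \<circ> fsig) p" by (simp add: subst_comp)
  also have "\<dots> = p"
  proof (rule subst_id_on)
    fix x :: "gen list"
    have "map swg (map swg x) = x" by (induct x) (auto, case_tac a, auto)
    then show "(fsig \<circ> fsig) x = x" by (simp add: fsig_def rev_map[symmetric])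
  qed
  finally show ?thesis .
qed

lemma sigT_Tcar: "x \<in> Tcar n r \<Longrightarrow> sigT n r x \<in> Tcar n r"
  by (auto simp: Tcar_iff sigT_cls)

lemma sigT_inv: "x \<in> Tcar n r \<Longrightarrow> sigT n r (sigT n r x) = x"
  by (auto simp: Tcar_iff sigT_cls SIG_SIG)

lemma sigT_bij: "bij_betw (sigT n r) (Tcar n r) (Tcar n r)"
  unfolding bij_betw_def
proof
  show "inj_on (sigT n r) (Tcar n r)" by (metis sigT_inv inj_onI)
  show "sigT n r ` Tcar n r = Tcar n r"
  proof
    show "sigT n r ` Tcar n r \<subseteq> Tcar n r" using sigT_Tcar by blast
    show "Tcar n r \<subseteq> sigT n r ` Tcar n r"
    proof
      fix x assume x: "x \<in> Tcar n r"
      then have "x = sigT n r (sigT n r x)" by (simp add: sigT_inv)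
      then show "x \<in> sigT n r ` Tcar n r" using sigT_Tcar[OF x] by blast
    qed
  qed
qed

lemma sigT_anti: "T_antiaut n r (sigT n r)"
  unfolding T_antiaut_def T_lin_def
  using sigT_bij
  by (auto simp: Tcar_iff sigT_cls Tadd_cls Tsmul_cls Tmul_cls Tone_cls C_comm)

lemma sigT_gens: "sigma_gens n r (sigT n r)"
  unfolding sigma_gens_def by (auto simp: Tgen_cls sigT_cls fsig_def)

definition Pf :: "nat \<Rightarrow> nat \<Rightarrow> fa" where
  "Pf i m = fprod (map (\<lambda>s.
       fsc (1 / (vv ^ s - vv powi (- int s)))
         (fsc (vv powi (1 - int s)) (fK i) - fsc (vv powi (int s - 1)) (fKi i)))
       [1..<m + 1])"

lemma fidem_Pf: "fidem n lam = fprod (map (\<lambda>i. Pf i (lam i)) [0..<n])"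
  by (simp add: fidem_def Pf_def)

lemma Kp_Pf: "i < n \<Longrightarrow> Kp n (Pf i m)"
  unfolding Pf_def fprod_eq by (rule Kp_prod_list) (auto simp: fsc_eq)

lemma Kp_fidem: "Kp n (fidem n lam)"
  unfolding fidem_Pf fprod_eq by (rule Kp_prod_list) (auto simp: Kp_Pf)

lemma NU_Pf: "NU n (Pf i m) = Pf (Suc i mod n) m"
  by (simp add: Pf_def o_def)

lemma SIG_Pf: "i < n \<Longrightarrow> cg n r (SIG (Pf i m)) (Pf i m)"
proof -
  assume i: "i < n"
  let ?F = "\<lambda>s. fsc (1 / (vv ^ s - vv powi (- int s)))
         (fsc (vv powi (1 - int s)) (fK i) - fsc (vv powi (int s - 1)) (fKi i))"
  have "map SIG (map ?F [1..<m + 1]) = map ?F [1..<m + 1]" by simp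
  then have "SIG (Pf i m) = prod_list (rev (map ?F [1..<m + 1]))"
    by (simp only: Pf_def fprod_eq SIG_prod_list)
  moreover have "cg n r (prod_list (rev (map ?F [1..<m + 1]))) (prod_list (map ?F [1..<m + 1]))"
    by (rule cg_prod_rev) (auto simp: fsc_eq i)
  ultimately show ?thesis by (simp add: Pf_def fprod_eq)
qed

lemma cg_prod_list: "list_all2 (cg n r) xs ys \<Longrightarrow> (\<And>x. x \<in> set ys \<Longrightarrow> x \<in> FA n) \<Longrightarrow> (\<And>x. x \<in> set xs \<Longrightarrow> x \<in> FA n) \<Longrightarrow>
   cg n r (prod_list xs) (prod_list ys)"
  by (induct rule: list_all2_induct) (auto intro!: cg_mult)

lemma sigT_idem: "sigT n r (Tidem n r lam) = Tidem n r lam"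
proof -
  have FA: "fidem n lam \<in> FA n" by (rule Kp_FA[OF Kp_fidem])
  let ?xs = "map (\<lambda>i. Pf i (lam i)) [0..<n]"
  have "SIG (fidem n lam) = prod_list (rev (map SIG ?xs))" by (simp only: fidem_Pf fprod_eq SIG_prod_list)
  moreover have "cg n r (prod_list (rev (map SIG ?xs))) (prod_list (rev ?xs))"
    by (rule cg_prod_list) (auto simp: list_all2_conv_all_nth rev_nth SIG_Pf Kp_FA Kp_Pf)
  moreover have "cg n r (prod_list (rev ?xs)) (prod_list ?xs)"
    by (rule cg_prod_rev) (auto simp: Kp_Pf)
  ultimately have "cg n r (SIG (fidem n lam)) (fidem n lam)"
    by (simp add: fidem_Pf fprod_eq) (blast intro: cg_trans)
  then show ?thesis using FA by (simp add: Tidem_def sigT_cls cls_eq_iff Kp_FA)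
qed

lemma nuT_idem: assumes "0 < n" shows "nuT n r (Tidem n r lam) = Tidem n r (shiftc n lam)"
proof -
  obtain k where k: "n = Suc k" using assms by (cases n) auto
  have FA: "fidem n lam \<in> FA n" by (rule Kp_FA[OF Kp_fidem])
  have FA2: "fidem n (shiftc n lam) \<in> FA n" by (rule Kp_FA[OF Kp_fidem])
  let ?Q = "\<lambda>i. Pf (Suc i) (lam i)"
  have l1: "map (\<lambda>i. Pf (Suc i mod n) (lam i)) [0..<n] = map ?Q [0..<k] @ [Pf 0 (lam k)]"
  proof -
    have a: "map (\<lambda>i. Pf (Suc i mod n) (lam i)) [0..<k] = map ?Q [0..<k]"
      by (rule map_cong) (auto simp: k)
    have "[0..<n] = [0..<k] @ [k]" by (simp add: k)
    then show ?thesis using a by (simp add: k)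
  qed
  have l2: "map (\<lambda>i. Pf i (shiftc n lam i)) [0..<n] = [Pf 0 (lam k)] @ map ?Q [0..<k]"
  proof -
    have "[0..<n] = 0 # map Suc [0..<k]" unfolding k by (simp add: upt_conv_Cons map_Suc_upt)
    moreover have "shiftc n lam 0 = lam k" unfolding k shiftc_def by simp
    moreover have "shiftc n lam (Suc i) = lam i" if "i < k" for i
    proof -
      have "(i + Suc k) mod Suc k = i mod Suc k" by (rule mod_add_self2)
      also have "\<dots> = i" using that by simp
      finally have "Suc (i + k) mod Suc k = i" by simp
      then show ?thesis using that unfolding k shiftc_def by simp
    qed
    ultimately show ?thesis by simp
  qed
  have "NU n (fidem n lam) = prod_list (map (\<lambda>i. Pf (Suc i mod n) (lam i)) [0..<n])"
    by (simp add: fidem_Pf fprod_eq NU_prod_list o_def NU_Pf)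
  also have "\<dots> = prod_list (map ?Q [0..<k] @ [Pf 0 (lam k)])" by (simp only: l1)
  finally have e1: "NU n (fidem n lam) = prod_list (map ?Q [0..<k] @ [Pf 0 (lam k)])" .
  have e2: "fidem n (shiftc n lam) = prod_list ([Pf 0 (lam k)] @ map ?Q [0..<k])"
    by (simp only: fidem_Pf fprod_eq l2)
  have "cg n r (prod_list (map ?Q [0..<k] @ [Pf 0 (lam k)])) (prod_list ([Pf 0 (lam k)] @ map ?Q [0..<k]))"
    by (rule cg_prod_swap) (auto simp: Kp_Pf k)
  then have "cg n r (NU n (fidem n lam)) (fidem n (shiftc n lam))" by (simp only: e1 e2)
  then show ?thesis using FA FA2 assms by (simp add: Tidem_def nuT_cls cls_eq_iff)
qed


lemma gens_agree_nu: assumes "nu_gens n r f1" "nu_gens n r f2" "gidx g < n" shows "f1 (Tgen n r g) = f2 (Tgen n r g)"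
  using assms by (cases g) (auto simp: nu_gens_def)

lemma gens_agree_sigma: assumes "sigma_gens n r f1" "sigma_gens n r f2" "gidx g < n" shows "f1 (Tgen n r g) = f2 (Tgen n r g)"
  using assms by (cases g) (auto simp: sigma_gens_def)

theorem proposition2p2p10:
  fixes n r :: nat
  assumes "3 \<le> r" and "r < n"
  shows "(\<exists>\<nu>. T_aut n r \<nu> \<and> nu_gens n r \<nu>
            \<and> (\<forall>x\<in>Tcar n r. (\<nu> ^^ n) x = x)
            \<and> (\<forall>m. 0 < m \<and> m < n \<longrightarrow> (\<exists>x\<in>Tcar n r. (\<nu> ^^ m) x \<noteq> x))
            \<and> (\<forall>\<psi>. T_aut n r \<psi> \<and> nu_gens n r \<psi> \<longrightarrow> (\<forall>x\<in>Tcar n r. \<psi> x = \<nu> x))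
            \<and> (\<forall>lam\<in>Comps n r. \<nu> (Tidem n r lam) = Tidem n r (shiftc n lam)))
       \<and> (\<exists>\<sigma>. T_antiaut n r \<sigma> \<and> sigma_gens n r \<sigma>
            \<and> (\<forall>\<psi>. T_antiaut n r \<psi> \<and> sigma_gens n r \<psi> \<longrightarrow> (\<forall>x\<in>Tcar n r. \<psi> x = \<sigma> x))
            \<and> (\<forall>lam\<in>Comps n r. \<sigma> (Tidem n r lam) = Tidem n r lam))"
proof -
  have n: "0 < n" and n3: "3 \<le> n" and r1: "1 \<le> r" using assms by auto
  have P1: "T_aut n r (nuT n r) \<and> nu_gens n r (nuT n r)
            \<and> (\<forall>x\<in>Tcar n r. (nuT n r ^^ n) x = x)
            \<and> (\<forall>m. 0 < m \<and> m < n \<longrightarrow> (\<exists>x\<in>Tcar n r. (nuT n r ^^ m) x \<noteq> x))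
            \<and> (\<forall>\<psi>. T_aut n r \<psi> \<and> nu_gens n r \<psi> \<longrightarrow> (\<forall>x\<in>Tcar n r. \<psi> x = nuT n r x))
            \<and> (\<forall>lam\<in>Comps n r. nuT n r (Tidem n r lam) = Tidem n r (shiftc n lam))"
  proof (intro conjI allI impI ballI)
    show "T_aut n r (nuT n r)" by (rule nuT_aut[OF n])
    show "nu_gens n r (nuT n r)" by (rule nuT_gens[OF n])
    show "(nuT n r ^^ n) x = x" if "x \<in> Tcar n r" for x using nuT_n[OF n that] .
    show "\<exists>x\<in>Tcar n r. (nuT n r ^^ m) x \<noteq> x" if "0 < m \<and> m < n" for m
    proof
      show "Tgen n r (GK 0) \<in> Tcar n r" using n by (simp add: Tgen_cls)
      show "(nuT n r ^^ m) (Tgen n r (GK 0)) \<noteq> Tgen n r (GK 0)"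
        using nuT_order[OF n3 r1 assms(2)] that by blast
    qed
    show "\<psi> x = nuT n r x" if "T_aut n r \<psi> \<and> nu_gens n r \<psi>" "x \<in> Tcar n r" for \<psi> x
    proof -
      have a: "T_aut n r \<psi>" "nu_gens n r \<psi>" using that(1) by auto
      have b: "T_aut n r (nuT n r)" by (rule nuT_aut[OF n])
      have "\<forall>x\<in>Tcar n r. \<psi> x = nuT n r x"
      proof (rule T_unique[where M = "Tmul n r"])
        show "T_lin n r \<psi>" using a by (simp add: T_aut_def)
        show "T_lin n r (nuT n r)" using b by (simp add: T_aut_def)
        show "\<forall>A\<in>Tcar n r. \<forall>B\<in>Tcar n r. \<psi> (Tmul n r A B) = Tmul n r (\<psi> A) (\<psi> B)"
          using a by (simp add: T_aut_def)
        show "\<forall>A\<in>Tcar n r. \<forall>B\<in>Tcar n r. nuT n r (Tmul n r A B) = Tmul n r (nuT n r A) (nuT n r B)"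
          using b by (simp add: T_aut_def)
        show "\<psi> (Tgen n r g) = nuT n r (Tgen n r g)" if "gidx g < n" for g
          using gens_agree_nu[OF a(2) nuT_gens[OF n] that] .
      qed
      then show ?thesis using that(2) by blast
    qed
    show "nuT n r (Tidem n r lam) = Tidem n r (shiftc n lam)" for lam by (rule nuT_idem[OF n])
  qed
  have P2: "T_antiaut n r (sigT n r) \<and> sigma_gens n r (sigT n r)
            \<and> (\<forall>\<psi>. T_antiaut n r \<psi> \<and> sigma_gens n r \<psi> \<longrightarrow> (\<forall>x\<in>Tcar n r. \<psi> x = sigT n r x))
            \<and> (\<forall>lam\<in>Comps n r. sigT n r (Tidem n r lam) = Tidem n r lam)"
  proof (intro conjI allI impI ballI)
    show "T_antiaut n r (sigT n r)" by (rule sigT_anti)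
    show "sigma_gens n r (sigT n r)" by (rule sigT_gens)
    show "\<psi> x = sigT n r x" if "T_antiaut n r \<psi> \<and> sigma_gens n r \<psi>" "x \<in> Tcar n r" for \<psi> x
    proof -
      have a: "T_antiaut n r \<psi>" "sigma_gens n r \<psi>" using that(1) by auto
      have b: "T_antiaut n r (sigT n r)" by (rule sigT_anti)
      have "\<forall>x\<in>Tcar n r. \<psi> x = sigT n r x"
      proof (rule T_unique[where M = "\<lambda>X Y. Tmul n r Y X"])
        show "T_lin n r \<psi>" using a by (simp add: T_antiaut_def)
        show "T_lin n r (sigT n r)" using b by (simp add: T_antiaut_def)
        show "\<forall>A\<in>Tcar n r. \<forall>B\<in>Tcar n r. \<psi> (Tmul n r A B) = Tmul n r (\<psi> B) (\<psi> A)"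
          using a by (simp add: T_antiaut_def)
        show "\<forall>A\<in>Tcar n r. \<forall>B\<in>Tcar n r. sigT n r (Tmul n r A B) = Tmul n r (sigT n r B) (sigT n r A)"
          using b by (simp add: T_antiaut_def)
        show "\<psi> (Tgen n r g) = sigT n r (Tgen n r g)" if "gidx g < n" for g
          using gens_agree_sigma[OF a(2) sigT_gens that] .
      qed
      then show ?thesis using that(2) by blast
    qed
    show "sigT n r (Tidem n r lam) = Tidem n r lam" for lam by (rule sigT_idem)
  qed
  show ?thesis
    apply (rule conjI)
     apply (rule exI[where x = "nuT n r"], rule P1)
    apply (rule exI[where x = "sigT n r"], rule P2)
    done
qed


end
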